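(* Let $f:\Delta_{\mathcal Y}\to\mathbb R$ be permutation-invariant and convex ($\mathcal Y=\{1,\dots,n\}$), and let $F:\mathrm{Dens}(\mathcal X)\to\mathbb R$ be $F(\rho)=f(\lambda(\rho))$. Then for every $\lambda\in\Delta_{\mathcal Y}$, every unitary $U$ on $\mathcal X=\mathbb C^n$, and every $d\in(\mathbb R\cup\{-\infty\})^n$: $d\in\overline\partial f(\lambda)$ if and only if $U\,\mathrm{Diag}(d)\,U^*\in\overline\partial F(U\,\mathrm{Diag}(\lambda)\,U^* )$.
   Context: $\lambda(A)$ is the vector of eigenvalues of a Hermitian $A$ in decreasing order; $\mathrm{Dens}(\mathcal X)$ the $n\times n$ density matrices, $\langle X,Y\rangle=\mathrm{Tr}(X^*Y)$. $f$ is permutation-invariant if $f(\pi p)=f(p)$ for all permutations $\pi$, $(\pi p)_y=p_{\pi_y}$. For $d\in(\mathbb R\cup\{-\infty\})^n$ and $x\in\mathbb R^n$, $\langle d,x\rangle=\sum_{y:d_y\in\mathbb R}d_yx_y-\infty\sum_{y:d_y=-\infty}x_y$ (with $-\infty\cdot0=0$). For unitary $U$ with columns $u_1,\dots,u_n$, $U\mathrm{Diag}(d)U^*$ denotes the extended Hermitian matrix $A-\infty B$ with $A=\sum_{d_y\in\mathbb R}d_yu_yu_y^*$, $B=\sum_{d_y=-\infty}u_yu_y^*$, acting by $\langle A-\infty B,X\rangle=\langle A,X\rangle-\infty\langle B,X\rangle$. For convex $G:C\to\mathbb R$, $\overline\partial G(x)$ is the set of such extended linear functionals $d$ with $G(x')\ge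 G(x)+\langle d,x'-x\rangle$ for all $x'\in C$ (here $C=\Delta_{\mathcal Y}$, resp. $C=\mathrm{Dens}(\mathcal X)$). *)

theory Defs
  imports "Jordan_Normal_Form.Char_Poly" "Jordan_Normal_Form.Schur_Decomposition"
    "HOL-Library.Extended_Real"
begin

text \<open>Vectors in R^n / C^n and n x n matrices are Jordan_Normal_Form vec/mat with
  explicit dimension n (indices 0..n-1 play the role of Y = {1..n}).\<close>

definition mtrace :: "complex mat \<Rightarrow> complex" where
  "mtrace A = (\<Sum>i<dim_row A. A $$ (i, i))"

definition hermitian :: "nat \<Rightarrow> complex mat \<Rightarrow> bool" where
  "hermitian n A \<longleftrightarrow> A \<in> carrier_mat n n \<and> mat_adjoint A = A"

definition unitary :: "nat \<Rightarrow> complex mat \<Rightarrow> bool" where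
  "unitary n U \<longleftrightarrow> U \<in> carrier_mat n n \<and> U * mat_adjoint U = 1\<^sub>m n \<and> mat_adjoint U * U = 1\<^sub>m n"

definition simplex :: "nat \<Rightarrow> real vec set" where
  "simplex n = {p \<in> carrier_vec n. (\<forall>i<n. 0 \<le> p $ i) \<and> (\<Sum>i<n. p $ i) = 1}"

definition Dens :: "nat \<Rightarrow> complex mat set" where
  "Dens n = {\<rho>. hermitian n \<rho> \<and>
     (\<forall>v \<in> carrier_vec n. Im (conjugate v \<bullet> (\<rho> *\<^sub>v v)) = 0 \<and> 0 \<le> Re (conjugate v \<bullet> (\<rho> *\<^sub>v v)))
     \<and> mtrace \<rho> = 1}"

definition eigvals :: "complex mat \<Rightarrow> real vec" where
  "eigvals A = vec_of_list (THE xs. length xs = dim_row A \<and> sorted_wrt (\<ge>) xs \<and>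
      (\<forall>x. count_list xs x = order (complex_of_real x) (char_poly A)))"

definition perm_invariant :: "nat \<Rightarrow> (real vec \<Rightarrow> real) \<Rightarrow> bool" where
  "perm_invariant n f \<longleftrightarrow> (\<forall>\<pi> p. \<pi> permutes {..<n} \<longrightarrow> p \<in> simplex n \<longrightarrow>
      f (vec n (\<lambda>y. p $ (\<pi> y))) = f p)"

definition convex_on_simplex :: "nat \<Rightarrow> (real vec \<Rightarrow> real) \<Rightarrow> bool" where
  "convex_on_simplex n f \<longleftrightarrow> (\<forall>p \<in> simplex n. \<forall>q \<in> simplex n. \<forall>t::real. 0 \<le> t \<longrightarrow> t \<le> 1 \<longrightarrow>
      f (t \<cdot>\<^sub>v p + (1 - t) \<cdot>\<^sub>v q) \<le> t * f p + (1 - t) * f q)"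

definition ext_vec :: "nat \<Rightarrow> ereal vec \<Rightarrow> bool" where
  "ext_vec n d \<longleftrightarrow> d \<in> carrier_vec n \<and> (\<forall>i<n. d $ i \<noteq> \<infinity>)"

text \<open>Pairing <d,x> = sum_{d_y real} d_y x_y - oo * sum_{d_y = -oo} x_y  (with -oo*0 = 0).\<close>
definition vpair :: "nat \<Rightarrow> ereal vec \<Rightarrow> real vec \<Rightarrow> ereal" where
  "vpair n d x = ereal (\<Sum>y\<in>{y. y < n \<and> d $ y \<noteq> -\<infinity>}. real_of_ereal (d $ y) * x $ y)
      + (-\<infinity>) * ereal (\<Sum>y\<in>{y. y < n \<and> d $ y = -\<infinity>}. x $ y)"

definition subdiff_vec :: "nat \<Rightarrow> (real vec \<Rightarrow> real) \<Rightarrow> real vec \<Rightarrow> ereal vec set" where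
  "subdiff_vec n G x = {d. ext_vec n d \<and>
      (\<forall>x' \<in> simplex n. ereal (G x') \<ge> ereal (G x) + vpair n d (x' - x))}"

text \<open>Extended Hermitian matrices A - oo B are represented by the pair (A, B).\<close>
definition mpair :: "complex mat \<times> complex mat \<Rightarrow> complex mat \<Rightarrow> ereal" where
  "mpair AB X = ereal (Re (mtrace (mat_adjoint (fst AB) * X)))
      + (-\<infinity>) * ereal (Re (mtrace (mat_adjoint (snd AB) * X)))"

definition subdiff_mat :: "nat \<Rightarrow> (complex mat \<Rightarrow> real) \<Rightarrow> complex mat \<Rightarrow> (complex mat \<times> complex mat) set" where
  "subdiff_mat n G \<rho> = {(A, B). hermitian n A \<and> hermitian n B \<and>
      (\<forall>\<rho>' \<in> Dens n. ereal (G \<rho>') \<ge> ereal (G \<rho>) + mpair (A, B) (\<rho>' - \<rho>))}"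

text \<open>U Diag(d) U^* = A - oo B with A = sum_{d_y real} d_y u_y u_y^*, B = sum_{d_y=-oo} u_y u_y^*.\<close>
definition ext_UDU :: "nat \<Rightarrow> complex mat \<Rightarrow> ereal vec \<Rightarrow> complex mat \<times> complex mat" where
  "ext_UDU n U d =
     (U * mat n n (\<lambda>(i, j). if i = j \<and> d $ i \<noteq> -\<infinity> then complex_of_real (real_of_ereal (d $ i)) else 0)
        * mat_adjoint U,
      U * mat n n (\<lambda>(i, j). if i = j \<and> d $ i = -\<infinity> then 1 else 0) * mat_adjoint U)"

definition UDU :: "nat \<Rightarrow> complex mat \<Rightarrow> real vec \<Rightarrow> complex mat" where
  "UDU n U p = U * mat n n (\<lambda>(i, j). if i = j then complex_of_real (p $ i) else 0) * mat_adjoint U"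

end

theory Submission
  imports Defs "HOL-Computational_Algebra.Fundamental_Theorem_Algebra"
begin


lemma adj_def': "mat_adjoint A = mat (dim_col A) (dim_row A) (\<lambda>(i,j). cnj (A $$ (j,i)))"
  unfolding mat_adjoint_def by (auto simp: mat_of_rows_def)

lemma adj_dims[simp]: "dim_row (mat_adjoint A) = dim_col A" "dim_col (mat_adjoint A) = dim_row A"
  unfolding mat_adjoint_def by simp_all

lemma adj_index[simp]: "i < dim_col A \<Longrightarrow> j < dim_row A \<Longrightarrow> mat_adjoint A $$ (i,j) = cnj (A $$ (j,i))"
  by (auto simp: adj_def')

lemma adj_carrier[simp]: "A \<in> carrier_mat m n \<Longrightarrow> mat_adjoint A \<in> carrier_mat n m"
  by auto

lemma adj_adj[simp]: "mat_adjoint (mat_adjoint (A::complex mat)) = A"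
  by (rule eq_matI) auto

lemma adj_mult: fixes A B :: "complex mat"
  assumes "A \<in> carrier_mat m k" "B \<in> carrier_mat k n"
  shows "mat_adjoint (A * B) = mat_adjoint B * mat_adjoint A"
proof (rule eq_matI)
  fix i j assume ij: "i < dim_row (mat_adjoint B * mat_adjoint A)" "j < dim_col (mat_adjoint B * mat_adjoint A)"
  hence i: "i < n" and j: "j < m" using assms by auto
  have "mat_adjoint (A * B) $$ (i,j) = cnj (\<Sum>l = 0..<k. A $$ (j,l) * B $$ (l,i))"
    using assms i j by (simp add: scalar_prod_def)
  also have "\<dots> = (\<Sum>l = 0..<k. cnj (B $$ (l,i)) * cnj (A $$ (j,l)))"
    by (simp add: mult.commute)
  also have "\<dots> = (mat_adjoint B * mat_adjoint A) $$ (i,j)"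
    using assms i j by (simp add: scalar_prod_def)
  finally show "mat_adjoint (A * B) $$ (i,j) = (mat_adjoint B * mat_adjoint A) $$ (i,j)" .
qed (use assms in auto)

lemma cnj_sq: "z * cnj z = complex_of_real ((cmod z)^2)" "cnj z * z = complex_of_real ((cmod z)^2)"
  by (simp_all only: complex_norm_square mult.commute)

lemma cnj_sq3: "z * c * cnj z = c * (complex_of_real (cmod z))^2"
proof -
  have "z * c * cnj z = c * (z * cnj z)" by (simp add: ac_simps)
  also have "z * cnj z = (complex_of_real (cmod z))^2" using complex_norm_square[of z] by simp
  finally show ?thesis .
qed

lemma mult_nn[simp]: "A \<in> carrier_mat n n \<Longrightarrow> B \<in> carrier_mat n n \<Longrightarrow> A * B \<in> carrier_mat n n"
  by (rule mult_carrier_mat)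

lemma mtrace_comm: fixes A B :: "complex mat"
  assumes "A \<in> carrier_mat m k" "B \<in> carrier_mat k m"
  shows "mtrace (A * B) = mtrace (B * A)"
proof -
  have "mtrace (A * B) = (\<Sum>i<m. \<Sum>l<k. A $$ (i,l) * B $$ (l,i))"
    unfolding mtrace_def using assms by (auto simp: scalar_prod_def atLeast0LessThan intro!: sum.cong)
  also have "\<dots> = (\<Sum>l<k. \<Sum>i<m. B $$ (l,i) * A $$ (i,l))"
    by (subst sum.swap) (simp add: mult.commute)
  also have "\<dots> = mtrace (B * A)"
    unfolding mtrace_def using assms by (auto simp: scalar_prod_def atLeast0LessThan intro!: sum.cong)
  finally show ?thesis .
qed

definition dg :: "nat \<Rightarrow> (nat \<Rightarrow> complex) \<Rightarrow> complex mat" where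
  "dg n c = mat n n (\<lambda>(i,j). if i = j then c i else 0)"

lemma dg_carrier[simp]: "dg n c \<in> carrier_mat n n" and dg_dims[simp]: "dim_row (dg n c) = n" "dim_col (dg n c) = n"
  by (auto simp: dg_def)

lemma dg_index[simp]: "i < n \<Longrightarrow> j < n \<Longrightarrow> dg n c $$ (i,j) = (if i = j then c i else 0)"
  by (auto simp: dg_def)

lemma sum_single_nz: "finite A \<Longrightarrow> j \<in> A \<Longrightarrow> (\<Sum>l\<in>A. if l = j then g l else 0) = g j"
  by (simp add: sum.delta')

lemma mult_dg_index: assumes "A \<in> carrier_mat m n" "i < m" "j < n"
  shows "(A * dg n c) $$ (i,j) = A $$ (i,j) * c j"
proof -
  have "(A * dg n c) $$ (i,j) = (\<Sum>l = 0..<n. A $$ (i,l) * (if l = j then c j else 0))"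
    using assms by (auto simp: scalar_prod_def intro!: sum.cong)
  also have "\<dots> = (\<Sum>l = 0..<n. if l = j then A $$ (i,j) * c j else 0)"
    by (rule sum.cong) auto
  also have "\<dots> = A $$ (i,j) * c j" using assms by simp
  finally show ?thesis .
qed

lemma dg_mult_index: assumes "A \<in> carrier_mat n m" "i < n" "j < m"
  shows "(dg n c * A) $$ (i,j) = c i * A $$ (i,j)"
proof -
  have "(dg n c * A) $$ (i,j) = (\<Sum>l = 0..<n. (if i = l then c i else 0) * A $$ (l,j))"
    using assms by (auto simp: scalar_prod_def intro!: sum.cong)
  also have "\<dots> = (\<Sum>l = 0..<n. if l = i then c i * A $$ (i,j) else 0)"
    by (rule sum.cong) auto
  also have "\<dots> = c i * A $$ (i,j)" using assms by simp
  finally show ?thesis .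
qed

lemma mtrace_dg_mult: assumes "Z \<in> carrier_mat n n"
  shows "mtrace (dg n a * Z) = (\<Sum>i<n. a i * Z $$ (i,i))"
  unfolding mtrace_def using assms by (auto simp del: index_mult_mat(1) simp: dg_mult_index intro!: sum.cong)

lemma unitaryD: assumes "unitary n U"
  shows "U \<in> carrier_mat n n" "U * mat_adjoint U = 1\<^sub>m n" "mat_adjoint U * U = 1\<^sub>m n"
  using assms unfolding unitary_def by auto

lemma unitary_adj: "unitary n U \<Longrightarrow> unitary n (mat_adjoint U)"
  unfolding unitary_def by auto

lemma unitary_mult: assumes "unitary n U" "unitary n V" shows "unitary n (U * V)"
proof -
  note u = unitaryD[OF assms(1)] and v = unitaryD[OF assms(2)]
  have a: "mat_adjoint (U * V) = mat_adjoint V * mat_adjoint U" using adj_mult u v by blast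
  have "U * V * (mat_adjoint V * mat_adjoint U) = U * (V * (mat_adjoint V * mat_adjoint U))"
    using u v by (intro assoc_mult_mat[of _ n n _ n _ n]) auto
  also have "V * (mat_adjoint V * mat_adjoint U) = V * mat_adjoint V * mat_adjoint U"
    using u v by (intro assoc_mult_mat[of _ n n _ n _ n, symmetric]) auto
  also have "U * (V * mat_adjoint V * mat_adjoint U) = 1\<^sub>m n" using u v by simp
  finally have 1: "U * V * mat_adjoint (U * V) = 1\<^sub>m n" using a by simp
  have "mat_adjoint V * mat_adjoint U * (U * V) = mat_adjoint V * (mat_adjoint U * (U * V))"
    using u v by (intro assoc_mult_mat[of _ n n _ n _ n]) auto
  also have "mat_adjoint U * (U * V) = mat_adjoint U * U * V"
    using u v by (intro assoc_mult_mat[of _ n n _ n _ n, symmetric]) auto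
  also have "mat_adjoint V * (mat_adjoint U * U * V) = 1\<^sub>m n" using u v by simp
  finally have 2: "mat_adjoint (U * V) * (U * V) = 1\<^sub>m n" using a by simp
  show ?thesis unfolding unitary_def using 1 2 u v by auto
qed

lemma unitary_rows: assumes "unitary n W" "i < n"
  shows "(\<Sum>j<n. (cmod (W $$ (i,j)))^2) = 1"
proof -
  have W: "W \<in> carrier_mat n n" using unitaryD[OF assms(1)] by auto
  have "(W * mat_adjoint W) $$ (i,i) = 1" using unitaryD[OF assms(1)] assms(2) by simp
  moreover have "(W * mat_adjoint W) $$ (i,i) = (\<Sum>j<n. complex_of_real ((cmod (W $$ (i,j)))^2))"
    using W assms(2) by (auto simp: scalar_prod_def atLeast0LessThan cnj_sq intro!: sum.cong)
  ultimately have "complex_of_real (\<Sum>j<n. (cmod (W $$ (i,j)))^2) = 1" by simp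
  thus ?thesis by (metis of_real_eq_1_iff)
qed

lemma unitary_cols: assumes "unitary n W" "j < n"
  shows "(\<Sum>i<n. (cmod (W $$ (i,j)))^2) = 1"
proof -
  have W: "W \<in> carrier_mat n n" using unitaryD[OF assms(1)] by auto
  have "(mat_adjoint W * W) $$ (j,j) = 1" using unitaryD[OF assms(1)] assms(2) by simp
  moreover have "(mat_adjoint W * W) $$ (j,j) = (\<Sum>i<n. complex_of_real ((cmod (W $$ (i,j)))^2))"
    using W assms(2) by (auto simp: scalar_prod_def atLeast0LessThan cnj_sq intro!: sum.cong)
  ultimately have "complex_of_real (\<Sum>i<n. (cmod (W $$ (i,j)))^2) = 1" by simp
  thus ?thesis by (metis of_real_eq_1_iff)
qed

lemma dg_adj: "mat_adjoint (dg n c) = dg n (\<lambda>i. cnj (c i))"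
  by (rule eq_matI) auto

lemma trace_formula:
  assumes U: "U \<in> carrier_mat n n" and V: "V \<in> carrier_mat n n"
  shows "mtrace (U * dg n a * mat_adjoint U * (V * dg n b * mat_adjoint V))
     = (\<Sum>i<n. \<Sum>j<n. a i * b j * complex_of_real ((cmod ((mat_adjoint U * V) $$ (i,j)))^2))"
proof -
  define W where "W = mat_adjoint U * V"
  have W: "W \<in> carrier_mat n n" using U V unfolding W_def by (intro mult_carrier_mat[of _ n n]) auto
  have Uh: "mat_adjoint U \<in> carrier_mat n n" using U by simp
  have Vh: "mat_adjoint V \<in> carrier_mat n n" using V by simp
  define Y where "Y = V * dg n b * mat_adjoint V"
  have Y: "Y \<in> carrier_mat n n" using V by (simp add: Y_def)
  have "U * dg n a * mat_adjoint U * Y = U * (dg n a * mat_adjoint U * Y)"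
    using U Uh Y by (simp add: assoc_mult_mat[of _ n n _ n _ n])
  hence "mtrace (U * dg n a * mat_adjoint U * Y) = mtrace (dg n a * mat_adjoint U * Y * U)"
    using mtrace_comm[of U n n "dg n a * mat_adjoint U * Y"] U Uh Y by simp
  also have "dg n a * mat_adjoint U * Y * U = dg n a * (W * dg n b * mat_adjoint W)"
  proof -
    have aW: "mat_adjoint (mat_adjoint U * V) = mat_adjoint V * U" using adj_mult[OF Uh V] by simp
    show ?thesis unfolding W_def aW Y_def using U V Uh Vh
      by (simp add: assoc_mult_mat[of _ n n _ n _ n])
  qed
  also have "mtrace (dg n a * (W * dg n b * mat_adjoint W)) = (\<Sum>i<n. a i * (W * dg n b * mat_adjoint W) $$ (i,i))"
    using W by (intro mtrace_dg_mult) simp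
  also have "\<dots> = (\<Sum>i<n. \<Sum>j<n. a i * b j * complex_of_real ((cmod (W $$ (i,j)))^2))"
  proof (rule sum.cong[OF refl])
    fix i assume i: "i \<in> {..<n}"
    have "(W * dg n b * mat_adjoint W) $$ (i,i) = (\<Sum>j<n. (W * dg n b) $$ (i,j) * cnj (W $$ (i,j)))"
      using W i by (auto simp: scalar_prod_def atLeast0LessThan intro!: sum.cong)
    also have "\<dots> = (\<Sum>j<n. b j * complex_of_real ((cmod (W $$ (i,j)))^2))"
      using W i by (auto simp del: index_mult_mat(1) simp: mult_dg_index cnj_sq3 intro!: sum.cong)
    finally show "a i * (W * dg n b * mat_adjoint W) $$ (i,i) = (\<Sum>j<n. a i * b j * complex_of_real ((cmod (W $$ (i,j)))^2))"
      by (simp add: sum_distrib_left mult.assoc)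
  qed
  finally show ?thesis unfolding Y_def W_def .
qed

lemma mult_idx: assumes "X \<in> carrier_mat n n" "Y \<in> carrier_mat n n" "i < n" "j < n"
  shows "(X * Y) $$ (i,j) = (\<Sum>l<n. X $$ (i,l) * Y $$ (l,j))"
  using assms by (simp add: scalar_prod_def atLeast0LessThan)

lemma mult3_idx: assumes "X \<in> carrier_mat n n" "Y \<in> carrier_mat n n" "Z \<in> carrier_mat n n" "i < n" "j < n"
  shows "(X * Y * Z) $$ (i,j) = (\<Sum>l<n. (\<Sum>p<n. X $$ (i,p) * Y $$ (p,l)) * Z $$ (l,j))"
proof -
  have "(X * Y * Z) $$ (i,j) = (\<Sum>l<n. (X * Y) $$ (i,l) * Z $$ (l,j))"
    using assms by (intro mult_idx) auto
  also have "\<dots> = (\<Sum>l<n. (\<Sum>p<n. X $$ (i,p) * Y $$ (p,l)) * Z $$ (l,j))"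
    using assms by (intro sum.cong refl) (subst mult_idx[OF assms(1,2) assms(4)], auto)
  finally show ?thesis .
qed

lemma unitary_one: "unitary n (1\<^sub>m n)"
proof -
  have "mat_adjoint (1\<^sub>m n) = (1\<^sub>m n :: complex mat)" by (rule eq_matI) auto
  thus ?thesis unfolding unitary_def by simp
qed


lemma weights_le:
  fixes b w :: "nat \<Rightarrow> real"
  assumes m: "m \<le> n" and w01: "\<And>j. j < n \<Longrightarrow> 0 \<le> w j \<and> w j \<le> 1"
    and ws: "(\<Sum>j<n. w j) = real m"
    and bdec: "\<And>i j. i \<le> j \<Longrightarrow> j < n \<Longrightarrow> b j \<le> b i"
  shows "(\<Sum>j<n. b j * w j) \<le> (\<Sum>j<m. b j)"
proof (cases "m = 0")
  case True
  hence "\<forall>j\<in>{..<n}. w j = 0" using sum_nonneg_eq_0_iff[of "{..<n}" w] ws w01 by auto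
  thus ?thesis using True by simp
next
  case False
  define t where "t = b (m - 1)"
  have split: "{..<n} = {..<m} \<union> {m..<n}" using m by auto
  have disj: "{..<m} \<inter> {m..<n} = {}" by auto
  have s1: "(\<Sum>j<m. b j * (1 - w j)) \<ge> (\<Sum>j<m. t * (1 - w j))"
    by (rule sum_mono) (use False m w01 bdec in \<open>auto simp: t_def intro!: mult_right_mono\<close>)
  have s2: "(\<Sum>j\<in>{m..<n}. b j * w j) \<le> (\<Sum>j\<in>{m..<n}. t * w j)"
    by (rule sum_mono) (use False m w01 bdec in \<open>auto simp: t_def intro!: mult_right_mono\<close>)
  have wsplit: "(\<Sum>j<n. w j) = (\<Sum>j<m. w j) + (\<Sum>j\<in>{m..<n}. w j)"
    unfolding split by (rule sum.union_disjoint) auto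
  have bsplit: "(\<Sum>j<n. b j * w j) = (\<Sum>j<m. b j * w j) + (\<Sum>j\<in>{m..<n}. b j * w j)"
    unfolding split by (rule sum.union_disjoint) auto
  have "(\<Sum>j<m. t * (1 - w j)) = t * (real m - (\<Sum>j<m. w j))"
    by (simp add: sum_distrib_left[symmetric] sum_subtractf)
  also have "\<dots> = t * (\<Sum>j\<in>{m..<n}. w j)" using ws wsplit by simp
  also have "\<dots> = (\<Sum>j\<in>{m..<n}. t * w j)" by (simp add: sum_distrib_left)
  finally have eq: "(\<Sum>j<m. t * (1 - w j)) = (\<Sum>j\<in>{m..<n}. t * w j)" .
  have "(\<Sum>j<m. b j) - (\<Sum>j<n. b j * w j) = (\<Sum>j<m. b j * (1 - w j)) - (\<Sum>j\<in>{m..<n}. b j * w j)"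
    using bsplit by (simp add: sum_subtractf algebra_simps)
  also have "\<dots> \<ge> 0" using s1 s2 eq by linarith
  finally show ?thesis by simp
qed

lemma abel_nonneg:
  fixes a x y :: "nat \<Rightarrow> real"
  shows "(\<And>i j. i \<le> j \<Longrightarrow> j < n \<Longrightarrow> a j \<le> a i) \<Longrightarrow> (\<And>i. i < n \<Longrightarrow> 0 \<le> a i)
    \<Longrightarrow> (\<And>k. k \<le> n \<Longrightarrow> (\<Sum>i<k. x i) \<le> (\<Sum>i<k. y i))
    \<Longrightarrow> (\<Sum>i<n. a i * x i) \<le> (\<Sum>i<n. a i * y i)"
proof (induction n arbitrary: a)
  case 0 thus ?case by simp
next
  case (Suc n)
  define c where "c = a n"
  have IH: "(\<Sum>i<n. (a i - c) * x i) \<le> (\<Sum>i<n. (a i - c) * y i)"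
    by (rule Suc.IH) (use Suc.prems in \<open>auto simp: c_def\<close>)
  have ex: "(\<Sum>i<Suc n. a i * x i) = (\<Sum>i<n. (a i - c) * x i) + c * (\<Sum>i<Suc n. x i)"
    by (simp add: c_def algebra_simps sum_distrib_left sum_subtractf)
  have ey: "(\<Sum>i<Suc n. a i * y i) = (\<Sum>i<n. (a i - c) * y i) + c * (\<Sum>i<Suc n. y i)"
    by (simp add: c_def algebra_simps sum_distrib_left sum_subtractf)
  have "c * (\<Sum>i<Suc n. x i) \<le> c * (\<Sum>i<Suc n. y i)"
    by (rule mult_left_mono) (use Suc.prems(2)[of n] Suc.prems(3)[of "Suc n"] in \<open>auto simp: c_def\<close>)
  thus ?case using IH ex ey by linarith
qed

lemma abel_gen:
  fixes a x y :: "nat \<Rightarrow> real"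
  assumes "\<And>i j. i \<le> j \<Longrightarrow> j < n \<Longrightarrow> a j \<le> a i"
    and "\<And>k. k \<le> n \<Longrightarrow> (\<Sum>i<k. x i) \<le> (\<Sum>i<k. y i)"
    and "(\<Sum>i<n. x i) = (\<Sum>i<n. y i)"
  shows "(\<Sum>i<n. a i * x i) \<le> (\<Sum>i<n. a i * y i)"
proof (cases n)
  case 0 thus ?thesis by simp
next
  case (Suc m)
  define c where "c = a m"
  have "(\<Sum>i<n. (a i - c) * x i) \<le> (\<Sum>i<n. (a i - c) * y i)"
    by (rule abel_nonneg) (use assms Suc in \<open>auto simp: c_def\<close>)
  moreover have "(\<Sum>i<n. a i * x i) = (\<Sum>i<n. (a i - c) * x i) + c * (\<Sum>i<n. x i)"
    by (simp add: algebra_simps sum_distrib_left sum_subtractf)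
  moreover have "(\<Sum>i<n. a i * y i) = (\<Sum>i<n. (a i - c) * y i) + c * (\<Sum>i<n. y i)"
    by (simp add: algebra_simps sum_distrib_left sum_subtractf)
  moreover have "c * (\<Sum>i<n. x i) = c * (\<Sum>i<n. y i)" using assms(3) by simp
  ultimately show ?thesis by linarith
qed

definition dstoch :: "nat \<Rightarrow> (nat \<Rightarrow> nat \<Rightarrow> real) \<Rightarrow> bool" where
  "dstoch n P \<longleftrightarrow> (\<forall>i<n. \<forall>j<n. 0 \<le> P i j) \<and> (\<forall>i<n. (\<Sum>j<n. P i j) = 1) \<and> (\<forall>j<n. (\<Sum>i<n. P i j) = 1)"

lemma dstoch_sorted:
  fixes a b :: "nat \<Rightarrow> real"
  assumes P: "dstoch n P"
    and adec: "\<And>i j. i \<le> j \<Longrightarrow> j < n \<Longrightarrow> a j \<le> a i"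
    and bdec: "\<And>i j. i \<le> j \<Longrightarrow> j < n \<Longrightarrow> b j \<le> b i"
  shows "(\<Sum>i<n. \<Sum>j<n. a i * b j * P i j) \<le> (\<Sum>i<n. a i * b i)"
proof -
  define x where "x i = (\<Sum>j<n. b j * P i j)" for i
  have P0: "\<And>i j. i < n \<Longrightarrow> j < n \<Longrightarrow> 0 \<le> P i j" and Pr: "\<And>i. i < n \<Longrightarrow> (\<Sum>j<n. P i j) = 1"
    and Pc: "\<And>j. j < n \<Longrightarrow> (\<Sum>i<n. P i j) = 1" using P unfolding dstoch_def by auto
  have lhs: "(\<Sum>i<n. \<Sum>j<n. a i * b j * P i j) = (\<Sum>i<n. a i * x i)"
    by (simp add: x_def sum_distrib_left mult.assoc)
  have part: "(\<Sum>i<k. x i) \<le> (\<Sum>i<k. b i)" if k: "k \<le> n" for k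
  proof -
    define w where "w j = (\<Sum>i<k. P i j)" for j
    have "(\<Sum>i<k. x i) = (\<Sum>j<n. b j * w j)"
      unfolding x_def w_def by (subst sum.swap) (simp add: sum_distrib_left)
    also have "\<dots> \<le> (\<Sum>j<k. b j)"
    proof (rule weights_le[OF k _ _ bdec])
      fix j assume j: "j < n"
      have "0 \<le> w j" unfolding w_def using P0 j k by (intro sum_nonneg) auto
      moreover have "w j \<le> (\<Sum>i<n. P i j)" unfolding w_def
        by (rule sum_mono2) (use P0 j k in auto)
      ultimately show "0 \<le> w j \<and> w j \<le> 1" using Pc j by simp
    next
      have "(\<Sum>j<n. w j) = (\<Sum>i<k. \<Sum>j<n. P i j)" unfolding w_def by (rule sum.swap)
      also have "\<dots> = (\<Sum>i<k. 1)" using Pr k by (intro sum.cong) auto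
      finally show "(\<Sum>j<n. w j) = real k" by simp
    qed auto
    finally show ?thesis .
  qed
  have tot: "(\<Sum>i<n. x i) = (\<Sum>i<n. b i)"
  proof -
    have "(\<Sum>i<n. x i) = (\<Sum>j<n. b j * (\<Sum>i<n. P i j))"
      unfolding x_def by (subst sum.swap) (simp add: sum_distrib_left)
    also have "\<dots> = (\<Sum>j<n. b j)" using Pc by (intro sum.cong) auto
    finally show ?thesis .
  qed
  show ?thesis unfolding lhs by (rule abel_gen[OF adec part tot]) auto
qed

lemma perm_lt: "p permutes {..<n} \<Longrightarrow> i < n \<Longrightarrow> p i < n"
  using permutes_in_image[of p "{..<n}" i] by simp

lemma sort_perm: fixes b :: "nat \<Rightarrow> real"
  shows "\<exists>p. p permutes {..<n} \<and> (\<forall>i j. i \<le> j \<longrightarrow> j < n \<longrightarrow> b (p j) \<le> b (p i))"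
proof -
  define L where "L = map b [0..<n]"
  define xs where "xs = rev (sort L)"
  have "mset xs = mset L" by (simp add: xs_def)
  then obtain p where p: "p permutes {..<length L}" and pl: "permute_list p L = xs"
    by (rule mset_eq_permutation)
  have lenL: "length L = n" by (simp add: L_def)
  have lenx: "length xs = n" by (simp add: xs_def lenL)
  have nth: "xs ! i = b (p i)" if "i < n" for i
  proof -
    have "p i < n" using p that lenL by (simp add: perm_lt)
    thus ?thesis using permute_list_nth[OF p, of i] that lenL pl by (simp add: L_def)
  qed
  have "sorted (rev xs)" by (simp add: xs_def)
  hence "\<forall>i j. i \<le> j \<longrightarrow> j < n \<longrightarrow> xs ! j \<le> xs ! i" unfolding sorted_rev_iff_nth_mono lenx .
  hence "\<forall>i j. i \<le> j \<longrightarrow> j < n \<longrightarrow> b (p j) \<le> b (p i)" using nth by auto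
  with p lenL show ?thesis by auto
qed

lemma dstoch_perm: fixes a b :: "nat \<Rightarrow> real"
  assumes P: "dstoch n P"
  shows "\<exists>\<sigma>. \<sigma> permutes {..<n} \<and> (\<Sum>i<n. \<Sum>j<n. a i * b j * P i j) \<le> (\<Sum>i<n. a i * b (\<sigma> i))"
proof -
  obtain \<alpha> where al: "\<alpha> permutes {..<n}" and adec: "\<And>i j. i \<le> j \<Longrightarrow> j < n \<Longrightarrow> a (\<alpha> j) \<le> a (\<alpha> i)"
    using sort_perm[of n a] by blast
  obtain \<beta> where be: "\<beta> permutes {..<n}" and bdec: "\<And>i j. i \<le> j \<Longrightarrow> j < n \<Longrightarrow> b (\<beta> j) \<le> b (\<beta> i)"
    using sort_perm[of n b] by blast
  have ain: "\<And>i. i < n \<Longrightarrow> \<alpha> i < n" using al by (simp add: perm_lt)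
  have bin: "\<And>i. i < n \<Longrightarrow> \<beta> i < n" using be by (simp add: perm_lt)
  define P' where "P' i j = P (\<alpha> i) (\<beta> j)" for i j
  have P0: "\<And>i j. i < n \<Longrightarrow> j < n \<Longrightarrow> 0 \<le> P i j" and Pr: "\<And>i. i < n \<Longrightarrow> (\<Sum>j<n. P i j) = 1"
    and Pc: "\<And>j. j < n \<Longrightarrow> (\<Sum>i<n. P i j) = 1" using P unfolding dstoch_def by auto
  have "dstoch n P'"
    unfolding dstoch_def
  proof (intro conjI allI impI)
    fix i j assume "i < n" "j < n" thus "0 \<le> P' i j" using P0 ain bin by (simp add: P'_def)
  next
    fix i assume i: "i < n"
    have "(\<Sum>j<n. P' i j) = (\<Sum>j<n. P (\<alpha> i) j)"
      unfolding P'_def using sum.permute[OF be, of "\<lambda>j. P (\<alpha> i) j"] by (simp add: comp_def)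
    thus "(\<Sum>j<n. P' i j) = 1" using Pr ain i by simp
  next
    fix j assume j: "j < n"
    have "(\<Sum>i<n. P' i j) = (\<Sum>i<n. P i (\<beta> j))"
      unfolding P'_def using sum.permute[OF al, of "\<lambda>i. P i (\<beta> j)"] by (simp add: comp_def)
    thus "(\<Sum>i<n. P' i j) = 1" using Pc bin j by simp
  qed
  from dstoch_sorted[OF this adec bdec]
  have ineq: "(\<Sum>i<n. \<Sum>j<n. a (\<alpha> i) * b (\<beta> j) * P' i j) \<le> (\<Sum>i<n. a (\<alpha> i) * b (\<beta> i))" .
  have "(\<Sum>i<n. \<Sum>j<n. a i * b j * P i j) = (\<Sum>i<n. \<Sum>j<n. a (\<alpha> i) * b j * P (\<alpha> i) j)"
    using sum.permute[OF al, of "\<lambda>i. \<Sum>j<n. a i * b j * P i j"] by (simp add: comp_def)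
  also have "\<dots> = (\<Sum>i<n. \<Sum>j<n. a (\<alpha> i) * b (\<beta> j) * P' i j)"
    unfolding P'_def
    by (rule sum.cong[OF refl]) (use sum.permute[OF be, of "\<lambda>j. a (\<alpha> _) * b j * P (\<alpha> _) j"] in \<open>simp add: comp_def\<close>)
  finally have e1: "(\<Sum>i<n. \<Sum>j<n. a i * b j * P i j) = (\<Sum>i<n. \<Sum>j<n. a (\<alpha> i) * b (\<beta> j) * P' i j)" .
  have e2: "(\<Sum>i<n. a (\<alpha> i) * b (\<beta> i)) = (\<Sum>i<n. a i * b (\<beta> (inv_into UNIV \<alpha> i)))"
    using sum.permutes_inv[OF al, of "\<lambda>x s. a x * b (\<beta> s)"] by simp
  have "(\<Sum>i<n. \<Sum>j<n. a i * b j * P i j) \<le> (\<Sum>i<n. a i * b ((\<beta> \<circ> inv_into UNIV \<alpha>) i))"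
    using ineq e1 e2 by simp
  moreover have "\<beta> \<circ> inv_into UNIV \<alpha> permutes {..<n}" using permutes_compose[OF permutes_inv[OF al] be] .
  ultimately show ?thesis by blast
qed


lemma exists_eigen: fixes M :: "complex mat"
  assumes M: "M \<in> carrier_mat m m" and m: "0 < m"
  shows "\<exists>e v. v \<in> carrier_vec m \<and> v \<noteq> 0\<^sub>v m \<and> M *\<^sub>v v = e \<cdot>\<^sub>v v"
proof -
  have deg: "degree (char_poly M) = m" using degree_monic_char_poly[OF M] by simp
  have "\<not> constant (poly (char_poly M))" unfolding constant_degree using deg m by simp
  then obtain e where "poly (char_poly M) e = 0" using fundamental_theorem_of_algebra by blast
  hence "eigenvalue M e" using eigenvalue_root_char_poly[OF M] by simp
  then obtain v where "eigenvector M v e" unfolding eigenvalue_def by blast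
  thus ?thesis unfolding eigenvector_def using M by auto
qed

lemma sum_delta_r[simp]: assumes "j < (n::nat)" shows "(\<Sum>l<n. f l * (if l = j then 1 else 0)) = (f j :: 'a::comm_ring_1)"
proof -
  have "(\<Sum>l<n. f l * (if l = j then 1 else 0)) = (\<Sum>l<n. if l = j then f l else 0)" by (rule sum.cong) auto
  thus ?thesis using sum_single_nz[of "{..<n}" j f] assms by simp
qed
lemma sum_delta_l[simp]: assumes "j < (n::nat)" shows "(\<Sum>l<n. (if j = l then 1 else 0) * f l) = (f j :: 'a::comm_ring_1)"
proof -
  have "(\<Sum>l<n. (if j = l then 1 else 0) * f l) = (\<Sum>l<n. if j = l then f l else 0)" by (rule sum.cong) auto
  also have "\<dots> = (\<Sum>l<n. if l = j then f l else 0)" by (rule sum.cong) auto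
  finally show ?thesis using sum_single_nz[of "{..<n}" j f] assms by simp
qed

lemma sum_delta_l2[simp]: assumes "j < (n::nat)" shows "(\<Sum>l<n. (if l = j then 1 else 0) * f l) = (f j :: 'a::comm_ring_1)"
proof -
  have "(\<Sum>l<n. (if l = j then 1 else 0) * f l) = (\<Sum>l<n. f l * (if l = j then 1 else 0))" by (simp add: mult.commute)
  thus ?thesis using assms by simp
qed
lemma sum_delta_r2[simp]: assumes "j < (n::nat)" shows "(\<Sum>l<n. f l * (if j = l then 1 else 0)) = (f j :: 'a::comm_ring_1)"
proof -
  have "(\<Sum>l<n. f l * (if j = l then 1 else 0)) = (\<Sum>l<n. (if j = l then 1 else 0) * f l)" by (simp add: mult.commute)
  thus ?thesis using assms by simp
qed

lemma cnj_delta[simp]: "cnj (if P then 1 else 0) = (if P then 1 else 0)" by simp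

definition nsq :: "nat \<Rightarrow> (nat \<Rightarrow> complex) \<Rightarrow> real" where
  "nsq n u = (\<Sum>i<n. (cmod (u i))^2)"

definition hh :: "nat \<Rightarrow> (nat \<Rightarrow> complex) \<Rightarrow> complex mat" where
  "hh n u = (let s = (if nsq n u = 0 then 0 else 2 / nsq n u) in
     mat n n (\<lambda>(i,j). (if i = j then 1 else 0) - complex_of_real s * u i * cnj (u j)))"

lemma hh_carrier[simp]: "hh n u \<in> carrier_mat n n" by (simp add: hh_def Let_def)
lemma hh_dims[simp]: "dim_row (hh n u) = n" "dim_col (hh n u) = n" by (simp_all add: hh_def Let_def)

lemma hh_index: "i < n \<Longrightarrow> j < n \<Longrightarrow> hh n u $$ (i,j) =
   (if i = j then 1 else 0) - complex_of_real (if nsq n u = 0 then 0 else 2 / nsq n u) * u i * cnj (u j)"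
  by (simp add: hh_def Let_def)

lemma hh_adj: "mat_adjoint (hh n u) = hh n u"
  by (rule eq_matI) (auto simp: hh_index)

lemma hh_sq: "hh n u * hh n u = 1\<^sub>m n"
proof (rule eq_matI)
  fix i j assume "i < dim_row (1\<^sub>m n)" "j < dim_col (1\<^sub>m n)"
  hence i: "i < n" and j: "j < n" by auto
  define s where "s = (if nsq n u = 0 then 0 else 2 / nsq n u)"
  define N where "N = nsq n u"
  have sN: "s * s * N = 2 * s" unfolding s_def N_def by auto
  have Nsum: "(\<Sum>l<n. u l * cnj (u l)) = complex_of_real N"
    unfolding N_def nsq_def by (simp add: cnj_sq)
  have hidx: "\<And>i j. i < n \<Longrightarrow> j < n \<Longrightarrow> hh n u $$ (i,j) = (if i = j then 1 else 0) - complex_of_real s * u i * cnj (u j)"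
    using hh_index unfolding s_def by blast
  have "(hh n u * hh n u) $$ (i,j) = (\<Sum>l<n. ((if i = l then 1 else 0) - complex_of_real s * u i * cnj (u l))
        * ((if l = j then 1 else 0) - complex_of_real s * u l * cnj (u j)))"
    using i j by (simp add: scalar_prod_def hidx atLeast0LessThan)
  also have "\<dots> = (\<Sum>l<n. (if i = l then 1 else 0) * (if l = j then 1 else 0))
      - (\<Sum>l<n. (if i = l then 1 else 0) * (complex_of_real s * u l * cnj (u j)))
      - (\<Sum>l<n. (complex_of_real s * u i * cnj (u l)) * (if l = j then 1 else 0))
      + (\<Sum>l<n. (complex_of_real s * u i * cnj (u l)) * (complex_of_real s * u l * cnj (u j)))"
    by (simp add: sum_subtractf sum.distrib algebra_simps)
  also have "(\<Sum>l<n. (complex_of_real s * u i * cnj (u l)) * (complex_of_real s * u l * cnj (u j)))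
      = complex_of_real s * complex_of_real s * u i * cnj (u j) * (\<Sum>l<n. u l * cnj (u l))"
    by (simp add: sum_distrib_left algebra_simps)
  also have "\<dots> = complex_of_real (s * s * N) * u i * cnj (u j)" unfolding Nsum by simp
  also have "\<dots> = complex_of_real (2 * s) * u i * cnj (u j)" unfolding sN ..
  finally show "(hh n u * hh n u) $$ (i,j) = 1\<^sub>m n $$ (i,j)"
    using i j by (simp add: if_distrib[of "\<lambda>x. x * _"] cong: if_cong)
qed auto

lemma hh_unitary: "unitary n (hh n u)"
  unfolding unitary_def using hh_adj hh_sq by simp

lemma spectral_step:
  fixes A V :: "complex mat"
  assumes A: "A \<in> carrier_mat n n" and hermA: "mat_adjoint A = A" and V: "unitary n V" and k: "k < n"
    and diag: "\<forall>i<n. \<forall>j<k. i \<noteq> j \<longrightarrow> (mat_adjoint V * A * V) $$ (i,j) = 0"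
  shows "\<exists>V'. unitary n V' \<and> (\<forall>i<n. \<forall>j<Suc k. i \<noteq> j \<longrightarrow> (mat_adjoint V' * A * V') $$ (i,j) = 0)"
proof -
  note Vc = unitaryD[OF V]
  define C where "C = mat_adjoint V * A * V"
  have Cc: "C \<in> carrier_mat n n" using A Vc by (simp add: C_def)
  have hermC: "mat_adjoint C = C"
  proof -
    have "mat_adjoint C = mat_adjoint V * mat_adjoint (mat_adjoint V * A)"
      unfolding C_def by (rule adj_mult[of _ n n]) (use A Vc in auto)
    also have "mat_adjoint (mat_adjoint V * A) = A * V"
      using adj_mult[of "mat_adjoint V" n n A n] A Vc hermA by simp
    also have "mat_adjoint V * (A * V) = C"
      unfolding C_def using A Vc by (simp add: assoc_mult_mat[of _ n n _ n _ n])
    finally show ?thesis .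
  qed
  have Ccol: "C $$ (i,j) = 0" if "i < n" "j < k" "i \<noteq> j" for i j
    using diag that by (simp add: C_def)
  have Crow: "C $$ (i,j) = 0" if "i < k" "j < n" "i \<noteq> j" for i j
  proof -
    have "C $$ (i,j) = mat_adjoint C $$ (i,j)" using hermC by simp
    also have "\<dots> = cnj (C $$ (j,i))" using Cc that k by simp
    also have "\<dots> = 0" using Ccol[of j i] that by simp
    finally show ?thesis .
  qed
  define m where "m = n - k"
  have nkm: "n = k + m" and m0: "0 < m" using k by (auto simp: m_def)
  define C3 where "C3 = mat m m (\<lambda>(i,j). C $$ (i+k, j+k))"
  have C3c: "C3 \<in> carrier_mat m m" by (simp add: C3_def)
  obtain e v where v: "v \<in> carrier_vec m" and v0: "v \<noteq> 0\<^sub>v m" and ev: "C3 *\<^sub>v v = e \<cdot>\<^sub>v v"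
    using exists_eigen[OF C3c m0] by blast
  define w where "w l = (if l < k then 0 else v $ (l - k))" for l
  have sumsplit: "(\<Sum>j<n. g j) = (\<Sum>j<k. g j) + (\<Sum>t<m. g (t + k))" for g :: "nat \<Rightarrow> complex"
  proof -
    have "(\<Sum>j<n. g j) = (\<Sum>j<k. g j) + (\<Sum>j = k..<k+m. g j)"
    proof -
      have "{..<k+m} = {..<k} \<union> {k..<k+m}" by auto
      moreover have "sum g ({..<k} \<union> {k..<k+m}) = sum g {..<k} + sum g {k..<k+m}"
        by (rule sum.union_disjoint) auto
      ultimately show ?thesis unfolding nkm by simp
    qed
    also have "(\<Sum>j = k..<k+m. g j) = (\<Sum>t<m. g (t + k))"
      using sum.shift_bounds_nat_ivl[of g 0 k m] by (simp add: atLeast0LessThan add.commute)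
    finally show ?thesis .
  qed
  have eigen_w: "(\<Sum>j<n. C $$ (l,j) * w j) = e * w l" if l: "l < n" for l
  proof -
    have "(\<Sum>j<n. C $$ (l,j) * w j) = (\<Sum>t<m. C $$ (l, t + k) * v $ t)"
      unfolding sumsplit by (simp add: w_def)
    also have "\<dots> = e * w l"
    proof (cases "l < k")
      case True
      thus ?thesis using Crow[of l] l nkm by (simp add: w_def)
    next
      case False
      define i where "i = l - k"
      have i: "i < m" and li: "l = i + k" using False l nkm by (auto simp: i_def)
      have "(C3 *\<^sub>v v) $ i = (\<Sum>t<m. C $$ (l, t + k) * v $ t)"
        using i v by (simp add: C3_def scalar_prod_def atLeast0LessThan li)
      moreover have "(e \<cdot>\<^sub>v v) $ i = e * w l" using i v False by (simp add: w_def i_def)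
      ultimately show ?thesis using ev by simp
    qed
    finally show ?thesis .
  qed
  obtain t where t: "t < m" and vt: "v $ t \<noteq> 0"
    using v v0 by (metis carrier_vecD eq_vecI index_zero_vec(1) index_zero_vec(2))
  define Nw where "Nw = nsq n w"
  have Nw0: "0 < Nw"
  proof -
    have "(cmod (w (t+k)))^2 \<le> Nw" unfolding Nw_def nsq_def
      by (rule member_le_sum) (use t nkm in auto)
    moreover have "0 < (cmod (w (t+k)))^2" using vt by (simp add: w_def)
    ultimately show ?thesis by linarith
  qed
  define ph where "ph = (if w k = 0 then 1 else cnj (w k) / complex_of_real (cmod (w k)))"
  have ph1: "cmod ph = 1" by (simp add: ph_def norm_divide)
  have phwk: "ph * w k = complex_of_real (cmod (w k))"
    by (auto simp: ph_def cnj_sq field_simps power2_eq_square)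
  define y where "y l = ph * w l / complex_of_real (sqrt Nw)" for l
  have y0: "y l = 0" if "l < k" for l using that by (simp add: y_def w_def)
  have eigen_y: "(\<Sum>j<n. C $$ (l,j) * y j) = e * y l" if "l < n" for l
  proof -
    have "(\<Sum>j<n. C $$ (l,j) * y j) = ph / complex_of_real (sqrt Nw) * (\<Sum>j<n. C $$ (l,j) * w j)"
      by (simp add: y_def sum_distrib_left algebra_simps)
    thus ?thesis using eigen_w[OF that] by (simp add: y_def algebra_simps)
  qed
  have yk: "y k = complex_of_real (cmod (w k) / sqrt Nw)"
    by (simp add: y_def phwk)
  have ynorm: "(\<Sum>l<n. y l * cnj (y l)) = 1"
  proof -
    have "(\<Sum>l<n. y l * cnj (y l)) = (\<Sum>l<n. complex_of_real ((cmod (w l))^2 / Nw))"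
    proof (rule sum.cong[OF refl])
      fix l
      have "y l * cnj (y l) = complex_of_real ((cmod (y l))^2)" by (simp add: cnj_sq)
      also have "cmod (y l) = cmod (w l) / sqrt Nw" using ph1 Nw0 by (simp add: y_def norm_mult norm_divide)
      finally show "y l * cnj (y l) = complex_of_real ((cmod (w l))^2 / Nw)" using Nw0 by (simp add: power_divide)
    qed
    also have "\<dots> = complex_of_real ((\<Sum>l<n. (cmod (w l))^2) / Nw)" by (simp add: sum_divide_distrib)
    also have "\<dots> = 1" using Nw0 by (simp add: Nw_def nsq_def)
    finally show ?thesis .
  qed
  define u where "u l = (if l = k then 1 else 0) - y l" for l
  define H where "H = hh n u"
  have Hc: "H \<in> carrier_mat n n" by (simp add: H_def)
  have uk: "cnj (u k) = 1 - y k" by (simp add: u_def yk)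
  have Nu: "complex_of_real (nsq n u) = 2 - 2 * y k"
  proof -
    have "complex_of_real (nsq n u) = (\<Sum>l<n. u l * cnj (u l))" by (simp add: nsq_def cnj_sq)
    also have "\<dots> = (\<Sum>l<n. (if l = k then 1 else 0) * (if l = k then 1 else 0))
        - (\<Sum>l<n. (if l = k then 1 else 0) * cnj (y l)) - (\<Sum>l<n. y l * (if l = k then 1 else 0))
        + (\<Sum>l<n. y l * cnj (y l))"
      by (simp add: u_def algebra_simps sum.distrib sum_subtractf)
    also have "\<dots> = 2 - 2 * y k" using ynorm k by (simp add: yk)
    finally show ?thesis .
  qed
  have H1: "H $$ (l,j) = (if l = j then 1 else 0)" if "l < n" "j < k" for l j
    using that k by (simp add: H_def hh_index u_def y0)
  have H2: "H $$ (l,k) = y l" if l: "l < n" for l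
  proof (cases "nsq n u = 0")
    case True
    have "u l = 0" using True l unfolding nsq_def
      using sum_nonneg_eq_0_iff[of "{..<n}" "\<lambda>l. (cmod (u l))^2"] by auto
    thus ?thesis using True l k by (simp add: H_def hh_index u_def split: if_splits)
  next
    case False
    have yk1: "y k \<noteq> 1" using False Nu by auto
    have "complex_of_real (2 / nsq n u) * (1 - y k) = 1"
      using Nu False yk1 by (simp add: field_simps of_real_divide)
    hence "H $$ (l,k) = (if l = k then 1 else 0) - u l * (complex_of_real (2 / nsq n u) * (1 - y k))"
      using False l k by (simp add: H_def hh_index uk algebra_simps del: of_real_divide)
    also have "\<dots> = y l" using \<open>complex_of_real (2 / nsq n u) * (1 - y k) = 1\<close> by (simp add: u_def)
    finally show ?thesis .
  qed
  have HH: "H * H = 1\<^sub>m n" unfolding H_def by (rule hh_sq)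
  have Hu: "unitary n H" unfolding H_def by (rule hh_unitary)
  have Ha: "mat_adjoint H = H" unfolding H_def by (rule hh_adj)
  define V' where "V' = V * H"
  have V'u: "unitary n V'" unfolding V'_def using unitary_mult[OF V Hu] .
  have C': "mat_adjoint V' * A * V' = H * C * H"
  proof -
    have "mat_adjoint V' = H * mat_adjoint V" unfolding V'_def using adj_mult[of V n n H n] Vc Hc Ha by simp
    hence "mat_adjoint V' * A * V' = H * mat_adjoint V * A * (V * H)" unfolding V'_def by simp
    also have "\<dots> = H * (mat_adjoint V * A * V) * H"
      using Hc Vc A by (simp add: assoc_mult_mat[of _ n n _ n _ n])
    finally show ?thesis unfolding C_def .
  qed
  have "\<forall>i<n. \<forall>j<Suc k. i \<noteq> j \<longrightarrow> (H * C * H) $$ (i,j) = 0"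
  proof (intro allI impI)
    fix i j assume i: "i < n" and j: "j < Suc k" and ij: "i \<noteq> j"
    have jn: "j < n" using j k by simp
    have ent: "(H * C * H) $$ (i,j) = (\<Sum>l<n. (\<Sum>p<n. H $$ (i,p) * C $$ (p,l)) * H $$ (l,j))"
      by (rule mult3_idx[OF Hc Cc Hc i jn])
    show "(H * C * H) $$ (i,j) = 0"
    proof (cases "j < k")
      case True
      have "(H * C * H) $$ (i,j) = (\<Sum>p<n. H $$ (i,p) * C $$ (p,j))"
        unfolding ent using True H1 jn by (simp add: H1)
      also have "\<dots> = (\<Sum>p<n. H $$ (i,p) * (if p = j then C $$ (j,j) else 0))"
        by (rule sum.cong[OF refl]) (use Ccol True in auto)
      also have "\<dots> = H $$ (i,j) * C $$ (j,j)"
        using sum_delta_r[OF jn, of "\<lambda>p. H $$ (i,p) * C $$ (j,j)"]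
        by (simp add: if_distrib[of "\<lambda>x. _ * x"] cong: if_cong)
      also have "\<dots> = 0" using H1[OF i True] ij by simp
      finally show ?thesis .
    next
      case False
      hence jk: "j = k" using j by simp
      have "(H * C * H) $$ (i,j) = (\<Sum>l<n. (\<Sum>p<n. H $$ (i,p) * C $$ (p,l)) * y l)"
        unfolding ent by (rule sum.cong[OF refl]) (simp add: H2 jk)
      also have "\<dots> = (\<Sum>p<n. H $$ (i,p) * (\<Sum>l<n. C $$ (p,l) * y l))"
        by (simp add: sum_distrib_left sum_distrib_right mult.assoc) (rule sum.swap)
      also have "\<dots> = (\<Sum>p<n. H $$ (i,p) * (e * H $$ (p,k)))"
        by (rule sum.cong[OF refl]) (simp add: eigen_y H2)
      also have "\<dots> = e * (H * H) $$ (i,k)"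
        using mult_idx[OF Hc Hc i k] by (simp add: sum_distrib_left algebra_simps)
      also have "\<dots> = 0" using HH i k ij jk by simp
      finally show ?thesis .
    qed
  qed
  thus ?thesis using V'u C' by metis
qed

lemma spectral:
  fixes A :: "complex mat"
  assumes A: "A \<in> carrier_mat n n" and hermA: "mat_adjoint A = A"
  shows "\<exists>V \<mu>. unitary n V \<and> A = V * dg n (\<lambda>i. complex_of_real (\<mu> i)) * mat_adjoint V"
proof -
  have "\<exists>V. unitary n V \<and> (\<forall>i<n. \<forall>j<k. i \<noteq> j \<longrightarrow> (mat_adjoint V * A * V) $$ (i,j) = 0)" if "k \<le> n" for k
    using that
  proof (induction k)
    case 0 thus ?case using unitary_one by blast
  next
    case (Suc k)
    then obtain V where "unitary n V" "\<forall>i<n. \<forall>j<k. i \<noteq> j \<longrightarrow> (mat_adjoint V * A * V) $$ (i,j) = 0"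
      by auto
    thus ?case using spectral_step[OF A hermA] Suc.prems by simp
  qed
  then obtain V where V: "unitary n V" and D0: "\<forall>i<n. \<forall>j<n. i \<noteq> j \<longrightarrow> (mat_adjoint V * A * V) $$ (i,j) = 0"
    by blast
  note Vc = unitaryD[OF V]
  define D where "D = mat_adjoint V * A * V"
  have Dc: "D \<in> carrier_mat n n" using A Vc by (simp add: D_def)
  have hermD: "mat_adjoint D = D"
  proof -
    have "mat_adjoint D = mat_adjoint V * mat_adjoint (mat_adjoint V * A)"
      unfolding D_def by (rule adj_mult[of _ n n]) (use A Vc in auto)
    also have "mat_adjoint (mat_adjoint V * A) = A * V"
      using adj_mult[of "mat_adjoint V" n n A n] A Vc hermA by simp
    also have "mat_adjoint V * (A * V) = D"
      unfolding D_def using A Vc by (simp add: assoc_mult_mat[of _ n n _ n _ n])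
    finally show ?thesis .
  qed
  define \<mu> where "\<mu> i = Re (D $$ (i,i))" for i
  have Ddg: "D = dg n (\<lambda>i. complex_of_real (\<mu> i))"
  proof (rule eq_matI)
    fix i j assume "i < dim_row (dg n (\<lambda>i. complex_of_real (\<mu> i)))" "j < dim_col (dg n (\<lambda>i. complex_of_real (\<mu> i)))"
    hence i: "i < n" and j: "j < n" by auto
    show "D $$ (i,j) = dg n (\<lambda>i. complex_of_real (\<mu> i)) $$ (i,j)"
    proof (cases "i = j")
      case True
      have "D $$ (i,i) = cnj (D $$ (i,i))" using hermD Dc i
        by (metis adj_index carrier_matD(1) carrier_matD(2))
      hence "Im (D $$ (i,i)) = 0" by (metis cnj.sel(2) complex.sel(2) neg_equal_zero)
      hence "D $$ (i,i) = complex_of_real (\<mu> i)" by (simp add: \<mu>_def complex_eq_iff)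
      thus ?thesis using True i by simp
    next
      case False thus ?thesis using D0 i j by (simp add: D_def)
    qed
  qed (use Dc in auto)
  have "V * D * mat_adjoint V = A"
  proof -
    have a1: "mat_adjoint V \<in> carrier_mat n n" using Vc by simp
    have "V * D * mat_adjoint V = V * (D * mat_adjoint V)"
      using Dc Vc by (intro assoc_mult_mat[of _ n n _ n _ n]) auto
    also have "D * mat_adjoint V = (mat_adjoint V * A) * (V * mat_adjoint V)"
      unfolding D_def using A Vc a1 by (intro assoc_mult_mat[of _ n n _ n _ n]) auto
    also have "\<dots> = mat_adjoint V * A" using Vc A a1 by simp
    also have "V * (mat_adjoint V * A) = (V * mat_adjoint V) * A"
      using A Vc a1 by (intro assoc_mult_mat[of _ n n _ n _ n, symmetric]) auto
    also have "\<dots> = A" using Vc A by simp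
    finally show ?thesis .
  qed
  thus ?thesis using V Ddg by metis
qed


lemma char_poly_UDU: fixes V :: "complex mat"
  assumes V: "unitary n V"
  shows "char_poly (V * dg n c * mat_adjoint V) = (\<Prod>a\<leftarrow>map c [0..<n]. [:- a, 1:])"
proof -
  note Vc = unitaryD[OF V]
  have "similar_mat (V * dg n c * mat_adjoint V) (dg n c)"
    unfolding similar_mat_def similar_mat_wit_def Let_def using Vc
    by (intro exI[of _ V] exI[of _ "mat_adjoint V"]) auto
  hence "char_poly (V * dg n c * mat_adjoint V) = char_poly (dg n c)" by (rule char_poly_similar)
  also have "\<dots> = (\<Prod>a\<leftarrow>diag_mat (dg n c). [:- a, 1:])"
    by (rule char_poly_upper_triangular[of _ n]) (auto simp: upper_triangular_def)
  also have "diag_mat (dg n c) = map c [0..<n]" by (simp add: diag_mat_def)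
  finally show ?thesis .
qed

lemma order_prod_lin: "order (x::complex) (\<Prod>a\<leftarrow>L. [:- a, 1:]) = count_list L x"
proof (induction L)
  case Nil thus ?case by (simp add: order_0I)
next
  case (Cons a L)
  have nz: "(\<Prod>a\<leftarrow>L. [:- a, 1:]) \<noteq> (0::complex poly)"
  proof -
    have "\<forall>a. [:- a, 1::complex:] \<noteq> 0" by simp
    thus ?thesis by (auto simp: prod_list_zero_iff)
  qed
  have "order x ([:- a, 1:] * (\<Prod>a\<leftarrow>L. [:- a, 1:])) = order x [:- a, 1:] + order x (\<Prod>a\<leftarrow>L. [:- a, 1:])"
    by (rule order_mult) (metis nz mult_eq_0_iff pCons_eq_0_iff zero_neq_one)
  thus ?case using Cons by (simp add: order_linear')
qed

lemma count_list_map_inj: "inj f \<Longrightarrow> count_list (map f L) (f x) = count_list L x"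
  by (induction L) (auto dest: injD)

lemma eigvals_UDU: fixes V :: "complex mat" and \<mu> :: "nat \<Rightarrow> real"
  assumes V: "unitary n V"
  shows "\<exists>p. p permutes {..<n} \<and> eigvals (V * dg n (\<lambda>i. complex_of_real (\<mu> i)) * mat_adjoint V) = vec n (\<lambda>y. \<mu> (p y))"
proof -
  note Vc = unitaryD[OF V]
  define M where "M = V * dg n (\<lambda>i. complex_of_real (\<mu> i)) * mat_adjoint V"
  define L where "L = map \<mu> [0..<n]"
  have dimM: "dim_row M = n" using Vc by (simp add: M_def)
  have ord: "order (complex_of_real x) (char_poly M) = count_list L x" for x
  proof -
    have "char_poly M = (\<Prod>a\<leftarrow>map complex_of_real L. [:- a, 1:])"
      unfolding M_def L_def using char_poly_UDU[OF V] by (simp add: comp_def)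
    hence "order (complex_of_real x) (char_poly M) = count_list (map complex_of_real L) (complex_of_real x)"
      by (simp only: order_prod_lin)
    thus ?thesis using count_list_map_inj[of complex_of_real L x] by (simp add: inj_def)
  qed
  define P where "P xs \<longleftrightarrow> length xs = dim_row M \<and> sorted_wrt (\<ge>) xs \<and>
      (\<forall>x. count_list xs x = order (complex_of_real x) (char_poly M))" for xs
  have P_iff: "P xs \<longleftrightarrow> xs = rev (sort L)" for xs
  proof
    assume "P xs"
    hence ms: "mset xs = mset L" and so: "sorted_wrt (\<ge>) xs"
      unfolding P_def ord by (auto simp: multiset_eq_iff count_mset)
    have "sorted (rev xs)" using so by (simp add: sorted_wrt_rev)
    moreover have "mset (rev xs) = mset L" using ms by simp
    ultimately have "sort L = rev xs" by (metis properties_for_sort)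
    thus "xs = rev (sort L)" by simp
  next
    assume xs: "xs = rev (sort L)"
    have "sorted_wrt (\<ge>) xs" unfolding xs by (simp add: sorted_wrt_rev)
    moreover have "count_list xs x = count_list L x" for x
      unfolding xs by (metis count_mset mset_rev mset_sort)
    ultimately show "P xs" unfolding P_def ord using dimM xs by (simp add: L_def)
  qed
  have ev: "eigvals M = vec_of_list (rev (sort L))"
    unfolding eigvals_def using P_iff unfolding P_def by simp
  have "mset (rev (sort L)) = mset L" by simp
  then obtain p where p: "p permutes {..<length L}" and pl: "permute_list p L = rev (sort L)"
    by (rule mset_eq_permutation)
  have lenL: "length L = n" by (simp add: L_def)
  have "vec_of_list (rev (sort L)) = vec n (\<lambda>y. \<mu> (p y))"
  proof (rule eq_vecI)
    fix i assume "i < dim_vec (vec n (\<lambda>y. \<mu> (p y)))"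
    hence i: "i < n" by simp
    have pi: "p i < n" using p i lenL permutes_in_image[of p "{..<n}" i] by simp
    have "rev (sort L) ! i = L ! p i" using permute_list_nth[OF p, of i] i lenL pl by simp
    thus "vec_of_list (rev (sort L)) $ i = vec n (\<lambda>y. \<mu> (p y)) $ i"
      using i pi by (simp add: L_def vec_of_list_index)
  qed (simp add: L_def)
  thus ?thesis using ev p lenL unfolding M_def by auto
qed


lemma UDU_dg: "UDU n U p = U * dg n (\<lambda>i. complex_of_real (p $ i)) * mat_adjoint U"
  unfolding UDU_def dg_def by simp

definition dr :: "ereal vec \<Rightarrow> nat \<Rightarrow> real" where
  "dr d i = (if d $ i = -\<infinity> then 0 else real_of_ereal (d $ i))"
definition ind :: "ereal vec \<Rightarrow> nat \<Rightarrow> real" where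
  "ind d i = (if d $ i = -\<infinity> then 1 else 0)"

lemma ext_UDU_dg: "ext_UDU n U d = (U * dg n (\<lambda>i. complex_of_real (dr d i)) * mat_adjoint U,
    U * dg n (\<lambda>i. complex_of_real (ind d i)) * mat_adjoint U)"
proof -
  have "mat n n (\<lambda>(i, j). if i = j \<and> d $ i \<noteq> -\<infinity> then complex_of_real (real_of_ereal (d $ i)) else 0)
      = dg n (\<lambda>i. complex_of_real (dr d i))"
    by (rule eq_matI) (auto simp: dr_def)
  moreover have "mat n n (\<lambda>(i, j). if i = j \<and> d $ i = -\<infinity> then 1 else 0) = dg n (\<lambda>i. complex_of_real (ind d i))"
    by (rule eq_matI) (auto simp: ind_def)
  ultimately show ?thesis unfolding ext_UDU_def by simp
qed

lemma herm_Udg: assumes U: "U \<in> carrier_mat n n"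
  shows "mat_adjoint (U * dg n (\<lambda>i. complex_of_real (a i)) * mat_adjoint U) = U * dg n (\<lambda>i. complex_of_real (a i)) * mat_adjoint U"
proof -
  let ?D = "dg n (\<lambda>i. complex_of_real (a i))"
  have "mat_adjoint (U * ?D * mat_adjoint U) = mat_adjoint (mat_adjoint U) * mat_adjoint (U * ?D)"
    by (rule adj_mult[of _ n n]) (use U in auto)
  also have "mat_adjoint (U * ?D) = mat_adjoint ?D * mat_adjoint U"
    by (rule adj_mult[of _ n n]) (use U in auto)
  also have "mat_adjoint ?D = ?D" by (simp add: dg_adj)
  also have "mat_adjoint (mat_adjoint U) * (?D * mat_adjoint U) = U * ?D * mat_adjoint U"
    using U by (simp add: assoc_mult_mat[of _ n n _ n _ n])
  finally show ?thesis .
qed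

lemma hermitian_Udg: "U \<in> carrier_mat n n \<Longrightarrow> hermitian n (U * dg n (\<lambda>i. complex_of_real (a i)) * mat_adjoint U)"
  unfolding hermitian_def using herm_Udg by auto

lemma re_tr: assumes U: "U \<in> carrier_mat n n" and V: "V \<in> carrier_mat n n"
  shows "Re (mtrace (mat_adjoint (U * dg n (\<lambda>i. complex_of_real (a i)) * mat_adjoint U) * (V * dg n (\<lambda>i. complex_of_real (b i)) * mat_adjoint V)))
    = (\<Sum>i<n. \<Sum>j<n. a i * b j * (cmod ((mat_adjoint U * V) $$ (i,j)))^2)"
  unfolding herm_Udg[OF U] trace_formula[OF U V] by simp

lemma re_tr_same: assumes U: "unitary n U"
  shows "Re (mtrace (mat_adjoint (U * dg n (\<lambda>i. complex_of_real (a i)) * mat_adjoint U) * (U * dg n (\<lambda>i. complex_of_real (b i)) * mat_adjoint U)))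
    = (\<Sum>i<n. a i * b i)"
proof -
  note Uc = unitaryD[OF U]
  have "Re (mtrace (mat_adjoint (U * dg n (\<lambda>i. complex_of_real (a i)) * mat_adjoint U) * (U * dg n (\<lambda>i. complex_of_real (b i)) * mat_adjoint U)))
    = (\<Sum>i<n. \<Sum>j<n. a i * b j * (cmod ((1\<^sub>m n :: complex mat) $$ (i,j)))^2)"
    using re_tr[OF Uc(1) Uc(1)] Uc(3) by simp
  also have "\<dots> = (\<Sum>i<n. \<Sum>j<n. if j = i then a i * b i else 0)"
    by (intro sum.cong refl) auto
  also have "\<dots> = (\<Sum>i<n. a i * b i)" by simp
  finally show ?thesis .
qed

lemma mtrace_minus: assumes "X \<in> carrier_mat n n" "Y \<in> carrier_mat n n"
  shows "mtrace (X - Y) = mtrace X - mtrace Y"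
  unfolding mtrace_def using assms by (simp add: sum_subtractf)

lemma re_tr_minus: assumes "X \<in> carrier_mat n n" "Y \<in> carrier_mat n n" "Z \<in> carrier_mat n n"
  shows "Re (mtrace (mat_adjoint X * (Y - Z))) = Re (mtrace (mat_adjoint X * Y)) - Re (mtrace (mat_adjoint X * Z))"
proof -
  have "mat_adjoint X * (Y - Z) = mat_adjoint X * Y - mat_adjoint X * Z"
    using assms by (intro mult_minus_distrib_mat[of _ n n]) auto
  thus ?thesis using assms mtrace_minus[of "mat_adjoint X * Y" n "mat_adjoint X * Z"] by simp
qed

lemma unitary_dstoch: assumes "unitary n W" shows "dstoch n (\<lambda>i j. (cmod (W $$ (i,j)))^2)"
  unfolding dstoch_def using unitary_rows[OF assms] unitary_cols[OF assms] by auto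

lemma UDU_idx: assumes U: "U \<in> carrier_mat n n" and p: "p < n" and q: "q < n"
  shows "(U * dg n c * mat_adjoint U) $$ (p,q) = (\<Sum>l<n. U $$ (p,l) * c l * cnj (U $$ (q,l)))"
proof -
  have "(U * dg n c * mat_adjoint U) $$ (p,q) = (\<Sum>l<n. (U * dg n c) $$ (p,l) * mat_adjoint U $$ (l,q))"
    using U p q by (intro mult_idx) auto
  also have "\<dots> = (\<Sum>l<n. U $$ (p,l) * c l * cnj (U $$ (q,l)))"
    using U p q by (intro sum.cong refl) (simp add: mult_dg_index del: index_mult_mat(1))
  finally show ?thesis .
qed

lemma quad_form: assumes U: "U \<in> carrier_mat n n" and v: "v \<in> carrier_vec n"
  shows "conjugate v \<bullet> ((U * dg n c * mat_adjoint U) *\<^sub>v v)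
     = (\<Sum>l<n. c l * complex_of_real ((cmod (\<Sum>q<n. cnj (U $$ (q,l)) * v $ q))^2))"
proof -
  define z where "z l = (\<Sum>q<n. cnj (U $$ (q,l)) * v $ q)" for l
  have Mc: "U * dg n c * mat_adjoint U \<in> carrier_mat n n" using U by simp
  have "conjugate v \<bullet> ((U * dg n c * mat_adjoint U) *\<^sub>v v)
      = (\<Sum>p<n. cnj (v $ p) * (\<Sum>q<n. (U * dg n c * mat_adjoint U) $$ (p,q) * v $ q))"
    using Mc v by (auto simp: scalar_prod_def atLeast0LessThan intro!: sum.cong)
  also have "\<dots> = (\<Sum>p<n. \<Sum>q<n. \<Sum>l<n. c l * (cnj (v $ p) * U $$ (p,l)) * (cnj (U $$ (q,l)) * v $ q))"
    using U by (auto simp del: index_mult_mat(1) simp: UDU_idx sum_distrib_left sum_distrib_right ac_simps intro!: sum.cong)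
  also have "\<dots> = (\<Sum>p<n. \<Sum>l<n. \<Sum>q<n. c l * (cnj (v $ p) * U $$ (p,l)) * (cnj (U $$ (q,l)) * v $ q))"
    by (rule sum.cong[OF refl]) (rule sum.swap)
  also have "\<dots> = (\<Sum>l<n. \<Sum>p<n. \<Sum>q<n. c l * (cnj (v $ p) * U $$ (p,l)) * (cnj (U $$ (q,l)) * v $ q))"
    by (rule sum.swap)
  also have "\<dots> = (\<Sum>l<n. c l * (cnj (z l) * z l))"
  proof (rule sum.cong[OF refl])
    fix l
    have cz: "cnj (z l) = (\<Sum>p<n. cnj (v $ p) * U $$ (p,l))" by (simp add: z_def mult.commute)
    show "(\<Sum>p<n. \<Sum>q<n. c l * (cnj (v $ p) * U $$ (p,l)) * (cnj (U $$ (q,l)) * v $ q)) = c l * (cnj (z l) * z l)"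
    proof -
      have "cnj (z l) * z l = (\<Sum>p<n. \<Sum>q<n. (cnj (v $ p) * U $$ (p,l)) * (cnj (U $$ (q,l)) * v $ q))"
        by (unfold cz, unfold z_def, rule sum_product)
      thus ?thesis by (simp add: sum_distrib_left mult.assoc)
    qed
  qed
  also have "\<dots> = (\<Sum>l<n. c l * complex_of_real ((cmod (z l))^2))" by (simp add: cnj_sq)
  finally show ?thesis unfolding z_def .
qed

lemma dg_cong: "(\<And>i. i < n \<Longrightarrow> c i = c' i) \<Longrightarrow> dg n c = dg n c'"
  unfolding dg_def by (rule eq_matI) auto

lemma mtrace_Udg: assumes U: "unitary n U"
  shows "mtrace (U * dg n c * mat_adjoint U) = (\<Sum>i<n. c i)"
proof -
  note Uc = unitaryD[OF U]
  have a1: "mat_adjoint U \<in> carrier_mat n n" using Uc by simp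
  have "U * dg n c * mat_adjoint U = U * (dg n c * mat_adjoint U)"
    using Uc a1 by (intro assoc_mult_mat[of _ n n _ n _ n]) auto
  hence "mtrace (U * dg n c * mat_adjoint U) = mtrace (dg n c * mat_adjoint U * U)"
    using mtrace_comm[of U n n "dg n c * mat_adjoint U"] Uc a1 by simp
  also have "dg n c * mat_adjoint U * U = dg n c * (mat_adjoint U * U)"
    using Uc a1 by (intro assoc_mult_mat[of _ n n _ n _ n]) auto
  also have "\<dots> = dg n c" using Uc by simp
  also have "mtrace (dg n c) = (\<Sum>i<n. c i)" unfolding mtrace_def by simp
  finally show ?thesis .
qed

lemma UDU_dens: assumes U: "unitary n U" and x: "x \<in> simplex n"
  shows "UDU n U x \<in> Dens n"
proof -
  note Uc = unitaryD[OF U]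
  have x0: "\<And>i. i < n \<Longrightarrow> 0 \<le> x $ i" and xs: "(\<Sum>i<n. x $ i) = 1" using x by (auto simp: simplex_def)
  have "hermitian n (UDU n U x)" unfolding UDU_dg by (rule hermitian_Udg[OF Uc(1)])
  moreover have "Im (conjugate v \<bullet> (UDU n U x *\<^sub>v v)) = 0 \<and> 0 \<le> Re (conjugate v \<bullet> (UDU n U x *\<^sub>v v))"
    if v: "v \<in> carrier_vec n" for v
  proof -
    have eq: "conjugate v \<bullet> (UDU n U x *\<^sub>v v) = complex_of_real (\<Sum>l<n. x $ l * (cmod (\<Sum>q<n. cnj (U $$ (q,l)) * v $ q))^2)"
      unfolding UDU_dg quad_form[OF Uc(1) v] by simp
    have "0 \<le> (\<Sum>l<n. x $ l * (cmod (\<Sum>q<n. cnj (U $$ (q,l)) * v $ q))^2)"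
      using x0 by (intro sum_nonneg) auto
    thus ?thesis unfolding eq by simp
  qed
  moreover have "mtrace (UDU n U x) = 1"
  proof -
    have "mtrace (UDU n U x) = (\<Sum>i<n. complex_of_real (x $ i))" unfolding UDU_dg mtrace_Udg[OF U] ..
    also have "\<dots> = complex_of_real (\<Sum>i<n. x $ i)" by simp
    finally show ?thesis using xs by simp
  qed
  ultimately show ?thesis unfolding Dens_def by auto
qed

lemma DensD: assumes "\<rho> \<in> Dens n"
  shows "hermitian n \<rho>" "\<And>v. v \<in> carrier_vec n \<Longrightarrow> 0 \<le> Re (conjugate v \<bullet> (\<rho> *\<^sub>v v))" "mtrace \<rho> = 1"
  using assms unfolding Dens_def by auto

lemma dens_decomp: assumes rho: "\<rho> \<in> Dens n"
  shows "\<exists>V \<mu>v. unitary n V \<and> \<mu>v \<in> simplex n \<and> \<rho> = UDU n V \<mu>v"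
proof -
  have "hermitian n \<rho>" using DensD(1)[OF rho] .
  hence herm: "\<rho> \<in> carrier_mat n n" "mat_adjoint \<rho> = \<rho>" unfolding hermitian_def by auto
  obtain V \<mu> where V: "unitary n V" and rV: "\<rho> = V * dg n (\<lambda>i. complex_of_real (\<mu> i)) * mat_adjoint V"
    using spectral[OF herm] by blast
  note Vc = unitaryD[OF V]
  define \<mu>v where "\<mu>v = vec n \<mu>"
  have "dg n (\<lambda>i. complex_of_real (\<mu>v $ i)) = dg n (\<lambda>i. complex_of_real (\<mu> i))"
    by (rule dg_cong) (simp add: \<mu>v_def)
  hence rU: "\<rho> = UDU n V \<mu>v" unfolding UDU_dg rV by simp
  have nonneg: "0 \<le> \<mu> i" if i: "i < n" for i
  proof -
    define v where "v = col V i"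
    have v: "v \<in> carrier_vec n" using Vc(1) col_dim[of V i] unfolding v_def by simp
    have z: "(\<Sum>q<n. cnj (V $$ (q,l)) * v $ q) = (if l = i then 1 else 0)" if l: "l < n" for l
    proof -
      have "(\<Sum>q<n. cnj (V $$ (q,l)) * v $ q) = (mat_adjoint V * V) $$ (l,i)"
        using mult_idx[of "mat_adjoint V" n V l i] Vc l i by (simp add: v_def)
      thus ?thesis using Vc l i by simp
    qed
    have "conjugate v \<bullet> (\<rho> *\<^sub>v v) = (\<Sum>l<n. complex_of_real (\<mu> l) * complex_of_real ((cmod (if l = i then 1 else 0))^2))"
      unfolding rV quad_form[OF Vc(1) v] by (intro sum.cong refl) (simp add: z)
    also have "\<dots> = (\<Sum>l<n. if l = i then complex_of_real (\<mu> l) else 0)"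
      by (intro sum.cong refl) auto
    also have "\<dots> = complex_of_real (\<mu> i)" using i by simp
    finally have eqm: "conjugate v \<bullet> (\<rho> *\<^sub>v v) = complex_of_real (\<mu> i)" .
    have "0 \<le> Re (conjugate v \<bullet> (\<rho> *\<^sub>v v))" using DensD(2)[OF rho v] .
    thus ?thesis unfolding eqm by simp
  qed
  have tr1: "mtrace \<rho> = (\<Sum>i<n. complex_of_real (\<mu> i))"
    using mtrace_Udg[OF V, of "\<lambda>i. complex_of_real (\<mu> i)"] rV by simp
  have tr2: "(\<Sum>i<n. complex_of_real (\<mu> i)) = complex_of_real (\<Sum>i<n. \<mu> i)"
    by (rule of_real_sum[symmetric])
  have "complex_of_real (\<Sum>i<n. \<mu> i) = 1" unfolding tr2[symmetric] tr1[symmetric] using DensD(3)[OF rho] .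
  hence "(\<Sum>i<n. \<mu> i) = 1" by (simp only: of_real_eq_1_iff)
  hence "\<mu>v \<in> simplex n" using nonneg unfolding simplex_def \<mu>v_def by auto
  thus ?thesis using V rU by blast
qed

lemma F_UDU: assumes f: "perm_invariant n f" and V: "unitary n V" and x: "x \<in> simplex n"
  shows "f (eigvals (UDU n V x)) = f x"
proof -
  obtain p where p: "p permutes {..<n}"
    and e: "eigvals (V * dg n (\<lambda>i. complex_of_real (x $ i)) * mat_adjoint V) = vec n (\<lambda>y. x $ (p y))"
    using eigvals_UDU[OF V, of "\<lambda>i. x $ i"] by blast
  have "f (vec n (\<lambda>y. x $ (p y))) = f x" using f p x unfolding perm_invariant_def by simp
  thus ?thesis unfolding UDU_dg e .
qed


lemma vpair_eq: assumes x: "x \<in> carrier_vec n" and lam: "lam \<in> carrier_vec n"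
  shows "vpair n d (x - lam) = ereal (\<Sum>i<n. dr d i * (x $ i - lam $ i)) + (-\<infinity>) * ereal (\<Sum>i<n. ind d i * (x $ i - lam $ i))"
proof -
  have s1: "{y. y < n \<and> d $ y \<noteq> -\<infinity>} = {y \<in> {..<n}. d $ y \<noteq> -\<infinity>}" by auto
  have s2: "{y. y < n \<and> d $ y = -\<infinity>} = {y \<in> {..<n}. d $ y = -\<infinity>}" by auto
  have e1: "(\<Sum>y\<in>{y. y < n \<and> d $ y \<noteq> -\<infinity>}. real_of_ereal (d $ y) * (x - lam) $ y) = (\<Sum>i<n. dr d i * (x $ i - lam $ i))"
    unfolding s1 by (subst sum.inter_filter) (use x lam in \<open>auto simp: dr_def intro!: sum.cong\<close>)
  have e2: "(\<Sum>y\<in>{y. y < n \<and> d $ y = -\<infinity>}. (x - lam) $ y) = (\<Sum>i<n. ind d i * (x $ i - lam $ i))"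
    unfolding s2 by (subst sum.inter_filter) (use x lam in \<open>auto simp: ind_def intro!: sum.cong\<close>)
  show ?thesis unfolding vpair_def e1 e2 ..
qed

context
  fixes n :: nat and f :: "real vec \<Rightarrow> real" and lam :: "real vec" and U :: "complex mat" and d :: "ereal vec"
  assumes f: "perm_invariant n f" and lam: "lam \<in> simplex n" and U: "unitary n U" and dv: "ext_vec n d"
begin

definition "Am = U * dg n (\<lambda>i. complex_of_real (dr d i)) * mat_adjoint U"
definition "Bm = U * dg n (\<lambda>i. complex_of_real (ind d i)) * mat_adjoint U"
definition "rho = UDU n U lam"

lemma ext_AB: "ext_UDU n U d = (Am, Bm)" unfolding Am_def Bm_def by (rule ext_UDU_dg)

lemma Uc: "U \<in> carrier_mat n n" using unitaryD[OF U] by simp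

lemma lamc: "lam \<in> carrier_vec n" "\<And>i. i < n \<Longrightarrow> 0 \<le> lam $ i" "(\<Sum>i<n. lam $ i) = 1"
  using lam unfolding simplex_def by auto

lemma mp_gen: assumes V: "unitary n V" and x: "x \<in> simplex n"
  shows "mpair (Am, Bm) (UDU n V x - rho) =
    ereal ((\<Sum>i<n. \<Sum>j<n. dr d i * x $ j * (cmod ((mat_adjoint U * V) $$ (i,j)))^2) - (\<Sum>i<n. dr d i * lam $ i))
    + (-\<infinity>) * ereal ((\<Sum>i<n. \<Sum>j<n. ind d i * x $ j * (cmod ((mat_adjoint U * V) $$ (i,j)))^2) - (\<Sum>i<n. ind d i * lam $ i))"
proof -
  have Vc: "V \<in> carrier_mat n n" using unitaryD[OF V] by simp
  have c1: "UDU n V x \<in> carrier_mat n n" using Vc by (simp add: UDU_dg)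
  have c2: "rho \<in> carrier_mat n n" using Uc by (simp add: UDU_dg rho_def)
  have cA: "Am \<in> carrier_mat n n" using Uc by (simp add: Am_def)
  have cB: "Bm \<in> carrier_mat n n" using Uc by (simp add: Bm_def)
  show ?thesis unfolding mpair_def fst_conv snd_conv re_tr_minus[OF cA c1 c2] re_tr_minus[OF cB c1 c2]
    unfolding Am_def Bm_def rho_def UDU_dg re_tr[OF Uc Vc] re_tr_same[OF U] ..
qed

lemma mp_same: assumes x: "x \<in> simplex n"
  shows "mpair (Am, Bm) (UDU n U x - rho) =
    ereal ((\<Sum>i<n. dr d i * x $ i) - (\<Sum>i<n. dr d i * lam $ i))
    + (-\<infinity>) * ereal ((\<Sum>i<n. ind d i * x $ i) - (\<Sum>i<n. ind d i * lam $ i))"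
proof -
  have c1: "UDU n U x \<in> carrier_mat n n" using Uc by (simp add: UDU_dg)
  have c2: "rho \<in> carrier_mat n n" using Uc by (simp add: UDU_dg rho_def)
  have cA: "Am \<in> carrier_mat n n" using Uc by (simp add: Am_def)
  have cB: "Bm \<in> carrier_mat n n" using Uc by (simp add: Bm_def)
  show ?thesis unfolding mpair_def fst_conv snd_conv re_tr_minus[OF cA c1 c2] re_tr_minus[OF cB c1 c2]
    unfolding Am_def Bm_def rho_def UDU_dg re_tr_same[OF U] ..
qed

lemma F_rho: "f (eigvals rho) = f lam" unfolding rho_def by (rule F_UDU[OF f U lam])

lemma backward: assumes H: "(Am, Bm) \<in> subdiff_mat n (\<lambda>\<rho>. f (eigvals \<rho>)) rho"
  shows "d \<in> subdiff_vec n f lam"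
  unfolding subdiff_vec_def
proof (intro CollectI conjI ballI)
  show "ext_vec n d" by (rule dv)
next
  fix x assume x: "x \<in> simplex n"
  have xc: "x \<in> carrier_vec n" using x by (simp add: simplex_def)
  have "ereal (f (eigvals (UDU n U x))) \<ge> ereal (f (eigvals rho)) + mpair (Am, Bm) (UDU n U x - rho)"
    using H UDU_dens[OF U x] unfolding subdiff_mat_def by auto
  moreover have "f (eigvals (UDU n U x)) = f x" by (rule F_UDU[OF f U x])
  moreover have "mpair (Am, Bm) (UDU n U x - rho) = vpair n d (x - lam)"
    unfolding mp_same[OF x] vpair_eq[OF xc lamc(1)]
    by (simp add: right_diff_distrib sum_subtractf)
  ultimately show "ereal (f lam) + vpair n d (x - lam) \<le> ereal (f x)" using F_rho by simp
qed


lemma ind01: "ind d i = 0 \<or> ind d i = 1" unfolding ind_def by auto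
lemma ind_nonneg: "0 \<le> ind d i" unfolding ind_def by auto
lemma dr_ind: "ind d i = 1 \<Longrightarrow> dr d i = 0" unfolding ind_def dr_def by (auto split: if_splits)

lemma claim1: assumes H: "\<forall>x\<in>simplex n. ereal (f lam) + vpair n d (x - lam) \<le> ereal (f x)"
  shows "(\<forall>i<n. ind d i = 1) \<or> (\<Sum>i<n. ind d i * lam $ i) = 0"
proof (rule ccontr)
  assume "\<not> ?thesis"
  then obtain z where z: "z < n" "ind d z \<noteq> 1" and nz: "(\<Sum>i<n. ind d i * lam $ i) \<noteq> 0" by auto
  have z0: "ind d z = 0" using z ind01 by auto
  have "(\<Sum>i<n. ind d i * lam $ i) \<ge> 0" using lamc ind_nonneg by (intro sum_nonneg) auto
  hence pos: "(\<Sum>i<n. ind d i * lam $ i) > 0" using nz by simp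
  define e where "e = vec n (\<lambda>i. if i = z then 1 else 0 :: real)"
  have ec: "e \<in> carrier_vec n" by (simp add: e_def)
  have es: "e \<in> simplex n"
  proof -
    have "(\<Sum>i<n. e $ i) = (\<Sum>i<n. if i = z then 1 else 0)" by (intro sum.cong) (auto simp: e_def)
    also have "\<dots> = 1" using z by simp
    finally show ?thesis unfolding simplex_def using ec by (auto simp: e_def)
  qed
  have "(\<Sum>i<n. ind d i * (e $ i - lam $ i)) = (\<Sum>i<n. ind d i * e $ i) - (\<Sum>i<n. ind d i * lam $ i)"
    by (simp add: right_diff_distrib sum_subtractf)
  also have "(\<Sum>i<n. ind d i * e $ i) = (\<Sum>i<n. if i = z then ind d z else 0)"
    by (intro sum.cong) (auto simp: e_def)
  also have "\<dots> = 0" using z z0 by simp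
  finally have neg: "(\<Sum>i<n. ind d i * (e $ i - lam $ i)) < 0" using pos by simp
  have "vpair n d (e - lam) = \<infinity>"
    unfolding vpair_eq[OF ec lamc(1)] using neg by simp
  with H es show False by auto
qed

lemma forward: assumes dsub: "d \<in> subdiff_vec n f lam"
  shows "(Am, Bm) \<in> subdiff_mat n (\<lambda>\<rho>. f (eigvals \<rho>)) rho"
proof -
  have H: "\<forall>x\<in>simplex n. ereal (f lam) + vpair n d (x - lam) \<le> ereal (f x)"
    using dsub unfolding subdiff_vec_def by auto
  have hA: "hermitian n Am" unfolding Am_def by (rule hermitian_Udg[OF Uc])
  have hB: "hermitian n Bm" unfolding Bm_def by (rule hermitian_Udg[OF Uc])
  have main: "ereal (f (eigvals rho)) + mpair (Am, Bm) (\<rho>' - rho) \<le> ereal (f (eigvals \<rho>'))"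
    if rho': "\<rho>' \<in> Dens n" for \<rho>'
  proof -
    obtain V \<mu> where V: "unitary n V" and mu: "\<mu> \<in> simplex n" and r': "\<rho>' = UDU n V \<mu>"
      using dens_decomp[OF rho'] by blast
    have muc: "\<mu> \<in> carrier_vec n" and mu0: "\<And>i. i < n \<Longrightarrow> 0 \<le> \<mu> $ i" and mus: "(\<Sum>i<n. \<mu> $ i) = 1"
      using mu unfolding simplex_def by auto
    have mu1: "\<mu> $ i \<le> 1" if "i < n" for i
    proof -
      have "\<mu> $ i \<le> (\<Sum>j<n. \<mu> $ j)" by (rule member_le_sum) (use that mu0 in auto)
      thus ?thesis using mus by simp
    qed
    define P where "P i j = (cmod ((mat_adjoint U * V) $$ (i,j)))^2" for i j
    have dsP: "dstoch n P" unfolding P_def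
      by (rule unitary_dstoch[OF unitary_mult[OF unitary_adj[OF U] V]])
    have P0: "\<And>i j. i < n \<Longrightarrow> j < n \<Longrightarrow> 0 \<le> P i j" and Pr: "\<And>i. i < n \<Longrightarrow> (\<Sum>j<n. P i j) = 1"
      and Pc: "\<And>j. j < n \<Longrightarrow> (\<Sum>i<n. P i j) = 1" using dsP unfolding dstoch_def by auto
    have P1: "P i j \<le> 1" if "i < n" "j < n" for i j
    proof -
      have "P i j \<le> (\<Sum>j<n. P i j)" by (rule member_le_sum) (use that P0 in auto)
      thus ?thesis using Pr that by simp
    qed
    define trA' where "trA' = (\<Sum>i<n. \<Sum>j<n. dr d i * \<mu> $ j * P i j)"
    define trA where "trA = (\<Sum>i<n. dr d i * lam $ i)"
    define trB' where "trB' = (\<Sum>i<n. \<Sum>j<n. ind d i * \<mu> $ j * P i j)"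
    define trB where "trB = (\<Sum>i<n. ind d i * lam $ i)"
    have Fr': "f (eigvals \<rho>') = f \<mu>" unfolding r' by (rule F_UDU[OF f V mu])
    have mp: "mpair (Am, Bm) (\<rho>' - rho) = ereal (trA' - trA) + (-\<infinity>) * ereal (trB' - trB)"
      unfolding r' mp_gen[OF V mu] trA'_def trA_def trB'_def trB_def P_def ..
    have goal_eq: "ereal (f (eigvals rho)) + mpair (Am, Bm) (\<rho>' - rho) = ereal (f lam) + (ereal (trA' - trA) + (-\<infinity>) * ereal (trB' - trB))"
      unfolding mp F_rho ..
    have trB'0: "0 \<le> trB'" unfolding trB'_def using P0 mu0 ind_nonneg
      by (intro sum_nonneg mult_nonneg_nonneg) auto
    have Hmu: "ereal (f lam) + vpair n d (\<mu> - lam) \<le> ereal (f \<mu>)" using H mu by auto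
    have "ereal (f lam) + (ereal (trA' - trA) + (-\<infinity>) * ereal (trB' - trB)) \<le> ereal (f \<mu>)"
    proof (cases "\<forall>i<n. ind d i = 1")
      case True
      have dr0: "\<And>i. i < n \<Longrightarrow> dr d i = 0" using True dr_ind by auto
      have "trA' = 0" unfolding trA'_def using dr0 by simp
      moreover have "trA = 0" unfolding trA_def using dr0 by simp
      moreover have "trB' = 1"
      proof -
        have "trB' = (\<Sum>i<n. \<Sum>j<n. \<mu> $ j * P i j)" unfolding trB'_def using True by simp
        also have "\<dots> = (\<Sum>j<n. \<mu> $ j * (\<Sum>i<n. P i j))" by (subst sum.swap) (simp add: sum_distrib_left)
        also have "\<dots> = (\<Sum>j<n. \<mu> $ j)" using Pc by simp
        finally show ?thesis using mus by simp
      qed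
      moreover have "trB = 1" unfolding trB_def using True lamc(3) by simp
      moreover have "vpair n d (\<mu> - lam) = 0"
      proof -
        have "(\<Sum>i<n. ind d i * (\<mu> $ i - lam $ i)) = (\<Sum>i<n. \<mu> $ i) - (\<Sum>i<n. lam $ i)"
          using True by (simp add: sum_subtractf)
        thus ?thesis unfolding vpair_eq[OF muc lamc(1)] using dr0 mus lamc(3) by simp
      qed
      ultimately show ?thesis using Hmu by simp
    next
      case False
      hence trB0: "trB = 0" using claim1[OF H] unfolding trB_def by auto
      show ?thesis
      proof (cases "trB' > 0")
        case True
        thus ?thesis using trB0 by simp
      next
        case False
        hence trB'0': "trB' = 0" using trB'0 by simp
        have inner0: "0 \<le> (\<Sum>j<n. ind d i * \<mu> $ j * P i j)" if "i < n" for i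
          using that P0 mu0 ind_nonneg by (intro sum_nonneg mult_nonneg_nonneg) auto
        have inner_z: "(\<Sum>j<n. ind d i * \<mu> $ j * P i j) = 0" if "i < n" for i
          using trB'0' inner0 sum_nonneg_eq_0_iff[of "{..<n}" "\<lambda>i. \<Sum>j<n. ind d i * \<mu> $ j * P i j"] that
          unfolding trB'_def by auto
        define K where "K = (\<Sum>i<n. \<bar>dr d i\<bar>)"
        define S where "S = (\<lambda>\<sigma>. \<Sum>i<n. ind d i * \<mu> $ (\<sigma> i)) ` {\<sigma>. \<sigma> permutes {..<n}}"
        have finS: "finite S" unfolding S_def by (intro finite_imageI finite_permutations) simp
        define \<delta> where "\<delta> = Min (insert 1 (S \<inter> {0<..}))"
        have fin2: "finite (insert 1 (S \<inter> {0<..}))" using finS by simp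
        have \<delta>pos: "0 < \<delta>" unfolding \<delta>_def using fin2 by (subst Min_gr_iff) auto
        have \<delta>le: "\<delta> \<le> t" if "t \<in> S" "0 < t" for t
          unfolding \<delta>_def using fin2 that by (intro Min_le) auto
        define M where "M = - (2 * K + 1) / \<delta>"
        have K0: "0 \<le> K" unfolding K_def by (intro sum_nonneg) auto
        have M0: "M \<le> 0" unfolding M_def using \<delta>pos K0 by (intro divide_nonpos_pos) auto
        have Md: "M * \<delta> = - (2 * K + 1)" unfolding M_def using \<delta>pos by simp
        define dM where "dM i = dr d i + M * ind d i" for i
        obtain \<sigma> where \<sigma>: "\<sigma> permutes {..<n}"
          and ineq: "(\<Sum>i<n. \<Sum>j<n. dM i * \<mu> $ j * P i j) \<le> (\<Sum>i<n. dM i * \<mu> $ (\<sigma> i))"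
          using dstoch_perm[OF dsP, of dM "\<lambda>j. \<mu> $ j"] by blast
        have \<sigma>lt: "\<And>i. i < n \<Longrightarrow> \<sigma> i < n" using \<sigma> perm_lt by blast
        define t where "t = (\<Sum>i<n. ind d i * \<mu> $ (\<sigma> i))"
        have lhs: "(\<Sum>i<n. \<Sum>j<n. dM i * \<mu> $ j * P i j) = trA' + M * trB'"
          unfolding dM_def trA'_def trB'_def by (simp add: algebra_simps sum.distrib sum_distrib_left)
        have rhs: "(\<Sum>i<n. dM i * \<mu> $ (\<sigma> i)) = (\<Sum>i<n. dr d i * \<mu> $ (\<sigma> i)) + M * t"
          unfolding dM_def t_def by (simp add: algebra_simps sum.distrib sum_distrib_left)
        have RA: "(\<Sum>i<n. dr d i * \<mu> $ (\<sigma> i)) \<le> K" unfolding K_def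
        proof (rule sum_mono)
          fix i assume "i \<in> {..<n}"
          hence m0: "0 \<le> \<mu> $ (\<sigma> i)" and m1: "\<mu> $ (\<sigma> i) \<le> 1" using mu0 mu1 \<sigma>lt by auto
          have "dr d i * \<mu> $ (\<sigma> i) \<le> \<bar>dr d i\<bar> * \<mu> $ (\<sigma> i)" using m0 by (intro mult_right_mono) auto
          also have "\<dots> \<le> \<bar>dr d i\<bar>" using m1 by (intro mult_left_le) auto
          finally show "dr d i * \<mu> $ (\<sigma> i) \<le> \<bar>dr d i\<bar>" .
        qed
        have LA: "- K \<le> trA'"
        proof -
          have "trA' = (\<Sum>i<n. dr d i * (\<Sum>j<n. \<mu> $ j * P i j))"
            unfolding trA'_def by (simp add: sum_distrib_left mult.assoc)
          moreover have "- \<bar>dr d i\<bar> \<le> dr d i * (\<Sum>j<n. \<mu> $ j * P i j)" if i: "i < n" for i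
          proof -
            define xi where "xi = (\<Sum>j<n. \<mu> $ j * P i j)"
            have x0: "0 \<le> xi" unfolding xi_def using mu0 P0 i by (intro sum_nonneg mult_nonneg_nonneg) auto
            have "xi \<le> (\<Sum>j<n. \<mu> $ j)" unfolding xi_def
              by (rule sum_mono) (use mu0 P1 i in \<open>auto intro: mult_left_le\<close>)
            hence x1: "xi \<le> 1" using mus by simp
            have "- \<bar>dr d i\<bar> \<le> - \<bar>dr d i\<bar> * xi" using x1 by (simp add: mult_left_le)
            also have "\<dots> \<le> dr d i * xi" using x0 by (intro mult_right_mono) auto
            finally show ?thesis unfolding xi_def .
          qed
          hence "(\<Sum>i<n. - \<bar>dr d i\<bar>) \<le> (\<Sum>i<n. dr d i * (\<Sum>j<n. \<mu> $ j * P i j))" by (intro sum_mono) auto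
          ultimately show ?thesis unfolding K_def by (simp add: sum_negf)
        qed
        have t0: "0 \<le> t" unfolding t_def using mu0 \<sigma>lt ind_nonneg by (intro sum_nonneg mult_nonneg_nonneg) auto
        have tS: "t \<in> S" unfolding S_def t_def using \<sigma> by auto
        have tz: "t = 0"
        proof (rule ccontr)
          assume "t \<noteq> 0"
          hence tp: "0 < t" using t0 by simp
          have "M * t \<le> M * \<delta>" using \<delta>le[OF tS tp] M0 by (intro mult_left_mono_neg) auto
          moreover have "M * trB' = 0" using trB'0' by simp
          ultimately have "trA' \<le> K - (2 * K + 1)" using ineq lhs rhs RA Md by linarith
          thus False using LA by linarith
        qed
        have trA'le: "trA' \<le> (\<Sum>i<n. dr d i * \<mu> $ (\<sigma> i))" using ineq lhs rhs trB'0' tz by simp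
        define x' where "x' = vec n (\<lambda>i. \<mu> $ (\<sigma> i))"
        have x'c: "x' \<in> carrier_vec n" by (simp add: x'_def)
        have x's: "x' \<in> simplex n"
        proof -
          have "(\<Sum>i<n. x' $ i) = (\<Sum>i<n. \<mu> $ (\<sigma> i))" by (intro sum.cong) (auto simp: x'_def)
          also have "\<dots> = (\<Sum>i<n. \<mu> $ i)" using sum.permute[OF \<sigma>, of "\<lambda>i. \<mu> $ i"] by (simp add: comp_def)
          finally show ?thesis unfolding simplex_def using x'c mu0 \<sigma>lt mus by (auto simp: x'_def)
        qed
        have fx': "f x' = f \<mu>" using f \<sigma> mu unfolding perm_invariant_def x'_def by simp
        have s2: "(\<Sum>i<n. ind d i * (x' $ i - lam $ i)) = 0"
        proof -
          have "(\<Sum>i<n. ind d i * (x' $ i - lam $ i)) = (\<Sum>i<n. ind d i * \<mu> $ (\<sigma> i)) - trB"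
            unfolding trB_def by (simp add: right_diff_distrib sum_subtractf x'_def)
          thus ?thesis using tz trB0 unfolding t_def by simp
        qed
        have s1: "(\<Sum>i<n. dr d i * (x' $ i - lam $ i)) = (\<Sum>i<n. dr d i * \<mu> $ (\<sigma> i)) - trA"
          unfolding trA_def by (simp add: right_diff_distrib sum_subtractf x'_def)
        have "vpair n d (x' - lam) = ereal ((\<Sum>i<n. dr d i * \<mu> $ (\<sigma> i)) - trA)"
          unfolding vpair_eq[OF x'c lamc(1)] s1 s2 by simp
        hence "ereal (f lam) + ereal ((\<Sum>i<n. dr d i * \<mu> $ (\<sigma> i)) - trA) \<le> ereal (f \<mu>)"
          using H x's fx' by auto
        hence "f lam + (trA' - trA) \<le> f \<mu>" using trA'le by simp
        thus ?thesis using trB0 trB'0' by simp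
      qed
    qed
    thus ?thesis unfolding goal_eq Fr' .
  qed
  show ?thesis unfolding subdiff_mat_def using hA hB main by auto
qed

lemma main_iff: "d \<in> subdiff_vec n f lam \<longleftrightarrow> ext_UDU n U d \<in> subdiff_mat n (\<lambda>\<rho>. f (eigvals \<rho>)) (UDU n U lam)"
  unfolding ext_AB rho_def[symmetric] using forward backward by blast

end


theorem lemma4p2:
  fixes n :: nat and f :: "real vec \<Rightarrow> real" and lam :: "real vec"
    and U :: "complex mat" and d :: "ereal vec"
  assumes "perm_invariant n f" and "convex_on_simplex n f"
    and "lam \<in> simplex n" and "unitary n U" and "ext_vec n d"
  shows "d \<in> subdiff_vec n f lam \<longleftrightarrow>
         ext_UDU n U d \<in> subdiff_mat n (\<lambda>\<rho>. f (eigvals \<rho>)) (UDU n U lam)"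
  using main_iff[OF assms(1,3,4,5)] .


end
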